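(* Let $1\le p<\infty$ and let $v=(v_n)_{n\in\mathbb{N}}$ be a sequence of positive numbers with $\sup_{n\in\mathbb{N}}v_n/v_{n+1}<\infty$, so that the backward shift $B(x_n)_{n\in\mathbb{N}}=(x_{n+1})_{n\in\mathbb{N}}$ is a bounded operator on $\ell^p(\mathbb{N},v)$. Then the following are equivalent: (a) $B$ is distributionally chaotic; (b) $B$ is densely distributionally chaotic; (c) there exist $\varepsilon>0$, an increasing sequence $(N_k)$ in $\mathbb{N}$, finite nonempty subsets $S_k\subset\mathbb{N}$ ($k\in\mathbb{N}$) and nonzero complex numbers $(C_{k,j})_{k\in\mathbb{N},j\in S_k}$ such that for every $k\in\mathbb{N}$ \[\operatorname{card}\Big\{1\le n\le N_k:\ \frac{\sum_{j\in S_k}|C_{k,j}|\,v_{j-n}}{\sum_{j\in S_k}|C_{k,j}|\,v_j}\ge k\Big\}\ge N_k\varepsilon,\] where $v_m:=0$ for $m\le0$.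
   Context: $\ell^p(\mathbb{N},v)=\{(x_n)_{n\in\mathbb{N}}:\sum_{n\ge1}|x_n|^pv_n<\infty\}$ with norm $\|x\|=(\sum_{n\ge1}|x_n|^pv_n)^{1/p}$. For $A\subseteq\mathbb{N}$, $\overline{\mathrm{dens}}(A)=\limsup_{N}\frac{\operatorname{card}(A\cap[1,N])}{N}$, $\underline{\mathrm{dens}}(A)=\liminf_{N}\frac{\operatorname{card}(A\cap[1,N])}{N}$. An operator $T$ on a Banach space $Y$ is distributionally chaotic if there exist an uncountable $\Gamma\subset Y$ and $\varepsilon>0$ such that for every $\delta>0$ and distinct $x,y\in\Gamma$: $\underline{\mathrm{dens}}\{j:\|T^jx-T^jy\|<\varepsilon\}=0$ and $\overline{\mathrm{dens}}\{j:\|T^jx-T^jy\|<\delta\}=1$; densely distributionally chaotic if $\Gamma$ can be chosen dense. *)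

theory Defs
  imports "HOL-Analysis.Analysis"
begin

text \<open>Sequences indexed by \<open>\<nat> = {1,2,...}\<close> are represented as functions
  \<open>nat \<Rightarrow> complex\<close> whose value at index 0 is 0 (canonical representative).\<close>

definition lpv_space :: "real \<Rightarrow> (nat \<Rightarrow> real) \<Rightarrow> (nat \<Rightarrow> complex) set" where
  "lpv_space p v = {x. x 0 = 0 \<and> summable (\<lambda>n. norm (x n) powr p * v n)}"

definition lpv_norm :: "real \<Rightarrow> (nat \<Rightarrow> real) \<Rightarrow> (nat \<Rightarrow> complex) \<Rightarrow> real" where
  "lpv_norm p v x = (\<Sum>n. norm (x n) powr p * v n) powr (1 / p)"

definition bshift :: "(nat \<Rightarrow> complex) \<Rightarrow> (nat \<Rightarrow> complex)" where
  "bshift x = (\<lambda>n. if n = 0 then 0 else x (Suc n))"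

definition upper_dens :: "nat set \<Rightarrow> ereal" where
  "upper_dens A = limsup (\<lambda>N. ereal (real (card (A \<inter> {1..N})) / real N))"

definition lower_dens :: "nat set \<Rightarrow> ereal" where
  "lower_dens A = liminf (\<lambda>N. ereal (real (card (A \<inter> {1..N})) / real N))"

definition dc_set ::
  "('a \<Rightarrow> 'a) \<Rightarrow> 'a set \<Rightarrow> ('a \<Rightarrow> 'a \<Rightarrow> real) \<Rightarrow> 'a set \<Rightarrow> bool" where
  "dc_set T X d \<Gamma> \<longleftrightarrow> \<Gamma> \<subseteq> X \<and> uncountable \<Gamma> \<and>
     (\<exists>\<epsilon>>0. \<forall>\<delta>>0. \<forall>x\<in>\<Gamma>. \<forall>y\<in>\<Gamma>. x \<noteq> y \<longrightarrow>
        lower_dens {j. d ((T ^^ j) x) ((T ^^ j) y) < \<epsilon>} = 0 \<and>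
        upper_dens {j. d ((T ^^ j) x) ((T ^^ j) y) < \<delta>} = 1)"

definition lpv_dist :: "real \<Rightarrow> (nat \<Rightarrow> real) \<Rightarrow> (nat \<Rightarrow> complex) \<Rightarrow> (nat \<Rightarrow> complex) \<Rightarrow> real" where
  "lpv_dist p v x y = lpv_norm p v (x - y)"

definition distr_chaotic_B :: "real \<Rightarrow> (nat \<Rightarrow> real) \<Rightarrow> bool" where
  "distr_chaotic_B p v \<longleftrightarrow> (\<exists>\<Gamma>. dc_set bshift (lpv_space p v) (lpv_dist p v) \<Gamma>)"

definition dense_distr_chaotic_B :: "real \<Rightarrow> (nat \<Rightarrow> real) \<Rightarrow> bool" where
  "dense_distr_chaotic_B p v \<longleftrightarrow> (\<exists>\<Gamma>. dc_set bshift (lpv_space p v) (lpv_dist p v) \<Gamma> \<and>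
      (\<forall>x\<in>lpv_space p v. \<forall>e>0. \<exists>y\<in>\<Gamma>. lpv_dist p v x y < e))"

definition vext :: "(nat \<Rightarrow> real) \<Rightarrow> int \<Rightarrow> real" where
  "vext v m = (if m \<le> 0 then 0 else v (nat m))"

end

theory Submission
  imports Defs "HOL-Library.Countable"
begin

lemma powr_add_le2:
  fixes a b p :: real
  assumes "0 \<le> a" "0 \<le> b" "0 \<le> p"
  shows "(a + b) powr p \<le> 2 powr p * (a powr p + b powr p)"
proof -
  have "a + b \<le> 2 * max a b" by simp
  hence "(a + b) powr p \<le> (2 * max a b) powr p"
    using assms by (intro powr_mono2) auto
  also have "\<dots> = 2 powr p * (max a b) powr p"
    using assms by (simp add: powr_mult)
  also have "(max a b) powr p \<le> a powr p + b powr p"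
    by (cases "a \<le> b") (auto simp: max_def)
  hence "2 powr p * (max a b) powr p \<le> 2 powr p * (a powr p + b powr p)"
    by (intro mult_left_mono) auto
  finally show ?thesis .
qed

lemma norm_diff_powr_le:
  fixes a b :: complex and p :: real
  assumes "0 \<le> p"
  shows "norm (a - b) powr p \<le> 2 powr p * (norm a powr p + norm b powr p)"
proof -
  have "norm (a - b) powr p \<le> (norm a + norm b) powr p"
    using assms by (intro powr_mono2) (auto simp: norm_triangle_ineq4)
  also have "\<dots> \<le> 2 powr p * (norm a powr p + norm b powr p)"
    using assms by (intro powr_add_le2) auto
  finally show ?thesis .
qed

lemma bshift_pow:
  assumes "x 0 = 0"
  shows "(bshift ^^ n) x = (\<lambda>m. if m = 0 then 0 else x (m + n))"
proof (induction n)
  case 0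
  then show ?case using assms by auto
next
  case (Suc n)
  have "(bshift ^^ Suc n) x = bshift ((bshift ^^ n) x)" by simp
  also have "\<dots> = (\<lambda>m. if m = 0 then 0 else x (m + Suc n))"
    unfolding Suc by (rule ext) (simp add: bshift_def)
  finally show ?case .
qed

lemma bshift_pow_diff:
  "(bshift ^^ n) (x - y) = (bshift ^^ n) x - (bshift ^^ n) y"
proof (induction n)
  case 0 then show ?case by simp
next
  case (Suc n)
  have "(bshift ^^ Suc n) (x - y) = bshift ((bshift ^^ n) (x - y))" by simp
  also have "\<dots> = bshift ((bshift ^^ n) x - (bshift ^^ n) y)" by (simp only: Suc)
  also have "\<dots> = (bshift ^^ Suc n) x - (bshift ^^ Suc n) y" by (simp add: bshift_def fun_eq_iff)
  finally show ?case .
qed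

locale wsh =
  fixes p :: real and v :: "nat \<Rightarrow> real" and M :: real
  assumes p1: "1 \<le> p" and vpos: "\<And>n. n \<ge> 1 \<Longrightarrow> v n > 0"
    and M1: "1 \<le> M" and vM: "\<And>n. n \<ge> 1 \<Longrightarrow> v n \<le> M * v (Suc n)"
begin

definition Qf :: "(nat \<Rightarrow> complex) \<Rightarrow> real" where
  "Qf x = (\<Sum>n. norm (x n) powr p * v n)"

lemma p0: "0 < p" using p1 by simp

lemma term_nonneg: "x 0 = 0 \<Longrightarrow> 0 \<le> norm (x n) powr p * v n"
  using vpos[of n] by (cases "n = 0") auto

lemma inX: "x \<in> lpv_space p v \<longleftrightarrow> x 0 = 0 \<and> summable (\<lambda>n. norm (x n) powr p * v n)"
  by (simp add: lpv_space_def)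

lemma Qf_nonneg: "x \<in> lpv_space p v \<Longrightarrow> 0 \<le> Qf x"
  unfolding Qf_def inX by (auto intro!: suminf_nonneg term_nonneg)

lemma X_diff:
  assumes "x \<in> lpv_space p v" "y \<in> lpv_space p v"
  shows "x - y \<in> lpv_space p v \<and> Qf (x - y) \<le> 2 powr p * (Qf x + Qf y)"
proof -
  have x0: "x 0 = 0" and y0: "y 0 = 0" and sx: "summable (\<lambda>n. norm (x n) powr p * v n)"
    and sy: "summable (\<lambda>n. norm (y n) powr p * v n)" using assms by (auto simp: inX)
  have le: "norm ((x - y) n) powr p * v n \<le> 2 powr p * (norm (x n) powr p * v n + norm (y n) powr p * v n)" for n
  proof (cases "n = 0")
    case True then show ?thesis using x0 y0 by simp
  next
    case False
    hence "v n > 0" using vpos by simp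
    have "norm ((x - y) n) powr p \<le> 2 powr p * (norm (x n) powr p + norm (y n) powr p)"
      using norm_diff_powr_le[of p "x n" "y n"] p0 by simp
    from mult_right_mono[OF this, of "v n"] \<open>v n > 0\<close> show ?thesis
      by (simp add: algebra_simps)
  qed
  have s2: "summable (\<lambda>n. 2 powr p * (norm (x n) powr p * v n + norm (y n) powr p * v n))"
    using sx sy by (intro summable_mult summable_add)
  have nn: "0 \<le> norm ((x - y) n) powr p * v n" for n using term_nonneg[of "x - y" n] x0 y0 by simp
  have s: "summable (\<lambda>n. norm ((x - y) n) powr p * v n)"
    by (rule summable_comparison_test[OF _ s2]) (use le nn in auto)
  have "Qf (x - y) \<le> (\<Sum>n. 2 powr p * (norm (x n) powr p * v n + norm (y n) powr p * v n))"
    unfolding Qf_def by (rule suminf_le[OF le s s2])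
  also have "\<dots> = 2 powr p * (Qf x + Qf y)"
    unfolding Qf_def using sx sy by (simp add: suminf_mult summable_add suminf_add[symmetric])
  finally show ?thesis using s x0 y0 by (simp add: inX)
qed

lemma X_scale:
  assumes "x \<in> lpv_space p v"
  shows "(\<lambda>n. c * x n) \<in> lpv_space p v \<and> Qf (\<lambda>n. c * x n) = norm c powr p * Qf x"
proof -
  have x0: "x 0 = 0" and sx: "summable (\<lambda>n. norm (x n) powr p * v n)" using assms by (auto simp: inX)
  have eq: "norm (c * x n) powr p * v n = norm c powr p * (norm (x n) powr p * v n)" for n
    by (simp add: norm_mult powr_mult)
  show ?thesis using x0 sx unfolding inX Qf_def eq
    by (simp add: summable_mult suminf_mult)
qed

lemma X_add:
  assumes "x \<in> lpv_space p v" "y \<in> lpv_space p v"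
  shows "(\<lambda>n. x n + y n) \<in> lpv_space p v \<and> Qf (\<lambda>n. x n + y n) \<le> 2 powr p * (Qf x + Qf y)"
proof -
  have "(\<lambda>n. (-1) * y n) \<in> lpv_space p v" "Qf (\<lambda>n. (-1) * y n) = Qf y"
    using X_scale[OF assms(2), of "-1"] by auto
  moreover have "(\<lambda>n. x n + y n) = x - (\<lambda>n. (-1) * y n)" by (simp add: fun_eq_iff)
  ultimately show ?thesis using X_diff[OF assms(1), of "\<lambda>n. (-1) * y n"] by simp
qed

lemma B_in_X:
  assumes "x \<in> lpv_space p v"
  shows "bshift x \<in> lpv_space p v \<and> Qf (bshift x) \<le> M * Qf x"
proof -
  have x0: "x 0 = 0" and sx: "summable (\<lambda>n. norm (x n) powr p * v n)" using assms by (auto simp: inX)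
  define g where "g n = norm (x n) powr p * v n" for n
  have g0: "0 \<le> g n" for n unfolding g_def using term_nonneg[of x n] x0 by simp
  have f: "norm (bshift x m) powr p * v m = (if m = 0 then 0 else norm (x (Suc m)) powr p * v m)" for m
    by (simp add: bshift_def)
  have le: "norm (bshift x m) powr p * v m \<le> M * g (Suc m)" for m
  proof (cases "m = 0")
    case True then show ?thesis using g0 M1 by (simp add: f)
  next
    case False
    hence "v m \<le> M * v (Suc m)" using vM by simp
    hence "norm (x (Suc m)) powr p * v m \<le> norm (x (Suc m)) powr p * (M * v (Suc m))"
      by (intro mult_left_mono) auto
    then show ?thesis using False unfolding f g_def by (simp add: algebra_simps)
  qed
  have sg: "summable g" using sx unfolding g_def .
  have sgS: "summable (\<lambda>m. M * g (Suc m))" using sg by (intro summable_mult) (simp add: summable_Suc_iff)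
  have nn: "0 \<le> norm (bshift x m) powr p * v m" for m
    using term_nonneg[of "bshift x" m] by (simp add: bshift_def)
  have s: "summable (\<lambda>m. norm (bshift x m) powr p * v m)"
    by (rule summable_comparison_test[OF _ sgS]) (use le nn in auto)
  have "Qf (bshift x) \<le> (\<Sum>m. M * g (Suc m))" unfolding Qf_def by (rule suminf_le[OF le s sgS])
  also have "\<dots> = M * (suminf g - g 0)" using sg by (simp add: suminf_mult suminf_split_head summable_Suc_iff)
  also have "\<dots> \<le> M * suminf g" using g0[of 0] M1 by (intro mult_left_mono) auto
  finally show ?thesis using s unfolding g_def by (simp add: inX bshift_def Qf_def g_def)
qed

lemma Bn_in_X:
  assumes "x \<in> lpv_space p v"
  shows "(bshift ^^ n) x \<in> lpv_space p v \<and> Qf ((bshift ^^ n) x) \<le> M ^ n * Qf x"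
proof (induction n)
  case 0 then show ?case using assms by simp
next
  case (Suc n)
  have "Qf ((bshift ^^ Suc n) x) \<le> M * Qf ((bshift ^^ n) x)" using B_in_X Suc by simp
  also have "\<dots> \<le> M * (M ^ n * Qf x)" using Suc M1 by (intro mult_left_mono) auto
  finally show ?case using B_in_X Suc by simp
qed

lemma dist_less_iff:
  assumes "x \<in> lpv_space p v" "y \<in> lpv_space p v" "e > 0"
  shows "lpv_dist p v x y < e \<longleftrightarrow> Qf (x - y) < e powr p"
proof -
  have q: "0 \<le> Qf (x - y)" using X_diff[OF assms(1,2)] Qf_nonneg by blast
  have d: "lpv_dist p v x y = Qf (x - y) powr (1 / p)"
    by (simp add: lpv_dist_def lpv_norm_def Qf_def)
  have ep: "(e powr p) powr (1/p) = e" using p0 assms(3) by (simp add: powr_powr)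
  show ?thesis
  proof
    assume "lpv_dist p v x y < e"
    hence "Qf (x - y) powr (1/p) < e" using d by simp
    hence "(Qf (x - y) powr (1/p)) powr p < e powr p" using p0 q by (intro powr_less_mono2) auto
    thus "Qf (x - y) < e powr p" using p0 q by (simp add: powr_powr)
  next
    assume "Qf (x - y) < e powr p"
    hence "Qf (x - y) powr (1/p) < (e powr p) powr (1/p)" using p0 q by (intro powr_less_mono2) auto
    thus "lpv_dist p v x y < e" using d ep by simp
  qed
qed

end

definition freq_dense :: "nat set \<Rightarrow> bool" where
  "freq_dense A \<longleftrightarrow> (\<forall>\<eta>::real>0. \<forall>N0. \<exists>N\<ge>N0. N \<ge> 1 \<and> real (card (A \<inter> {1..N})) \<ge> (1 - \<eta>) * real N)"

definition freq_sparse :: "nat set \<Rightarrow> bool" where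
  "freq_sparse A \<longleftrightarrow> (\<forall>\<eta>::real>0. \<forall>N0. \<exists>N\<ge>N0. N \<ge> 1 \<and> real (card (A \<inter> {1..N})) \<le> \<eta> * real N)"

lemma card_frac_le1: "real (card (A \<inter> {1..N})) / real N \<le> 1"
proof (cases "N = 0")
  case False
  have "card (A \<inter> {1..N}) \<le> card {1..N}" by (intro card_mono) auto
  then show ?thesis using False by (simp add: divide_le_eq_1)
qed simp

lemma freq_dense_upper: assumes "freq_dense A" shows "upper_dens A = 1"
proof -
  define f where "f N = ereal (real (card (A \<inter> {1..N})) / real N)" for N
  have f1: "f N \<le> 1" for N unfolding f_def using card_frac_le1[of A N] by simp
  have le: "limsup f \<le> 1"
    by (rule Limsup_bounded) (use f1 in simp)
  have ge: "1 \<le> limsup f"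
  proof (rule ccontr)
    assume "\<not> 1 \<le> limsup f"
    hence "limsup f < 1" by simp
    then obtain y where y: "limsup f < y" "y < 1" using dense by blast
    have "\<forall>y'>limsup f. eventually (\<lambda>x. y' > f x) sequentially"
      using Limsup_le_iff[where C="limsup f" and F=sequentially and X=f] by simp
    hence ev: "eventually (\<lambda>N. f N < y) sequentially" using y(1) by blast
    obtain r where r: "y = ereal r" using y by (cases y) auto
    have "r < 1" using y r by simp
    obtain N0 where N0: "\<And>N. N \<ge> N0 \<Longrightarrow> f N < y" using ev by (auto simp: eventually_sequentially)
    obtain N where N: "N \<ge> N0" "N \<ge> 1" "real (card (A \<inter> {1..N})) \<ge> (1 - (1 - r)) * N"
    proof -
      have "1 - r > 0" using \<open>r < 1\<close> by simp
      from assms[unfolded freq_dense_def, rule_format, OF this, of N0] show ?thesis using that by blast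
    qed
    have "r \<le> real (card (A \<inter> {1..N})) / real N" using N by (simp add: le_divide_eq)
    hence "y \<le> f N" using r by (simp add: f_def)
    with N0[OF N(1)] show False by simp
  qed
  show ?thesis unfolding upper_dens_def using le ge unfolding f_def by (rule antisym)
qed

lemma freq_sparse_lower: assumes "freq_sparse A" shows "lower_dens A = 0"
proof -
  define f where "f N = ereal (real (card (A \<inter> {1..N})) / real N)" for N
  have f0: "0 \<le> f N" for N unfolding f_def by simp
  have f1: "f N \<le> 1" for N unfolding f_def using card_frac_le1[of A N] by simp
  have ge: "0 \<le> liminf f"
    by (rule Liminf_bounded) (use f0 in simp)
  have le: "liminf f \<le> 0"
  proof (rule ccontr)
    assume "\<not> liminf f \<le> 0"
    hence "0 < liminf f" by simp
    then obtain y where y: "0 < y" "y < liminf f" using dense by blast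
    have "\<forall>y'<liminf f. eventually (\<lambda>x. y' < f x) sequentially"
      using le_Liminf_iff[where C="liminf f" and F=sequentially and X=f] by simp
    hence ev: "eventually (\<lambda>N. y < f N) sequentially" using y(2) by blast
    have "liminf f \<le> 1" using f1 by (intro Liminf_le) auto
    obtain r where r: "y = ereal r" using y \<open>liminf f \<le> 1\<close> by (cases y) auto
    have "r > 0" using y r by simp
    obtain N0 where N0: "\<And>N. N \<ge> N0 \<Longrightarrow> y < f N" using ev by (auto simp: eventually_sequentially)
    obtain N where N: "N \<ge> N0" "N \<ge> 1" "real (card (A \<inter> {1..N})) \<le> r * N"
      using assms[unfolded freq_sparse_def, rule_format, OF \<open>r > 0\<close>, of N0] by blast
    have "real (card (A \<inter> {1..N})) / real N \<le> r" using N by (simp add: divide_le_eq)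
    hence "f N \<le> y" using r by (simp add: f_def)
    with N0[OF N(1)] show False by simp
  qed
  show ?thesis unfolding lower_dens_def using le ge unfolding f_def by (rule antisym)
qed

lemma lower_zero_sparse:
  assumes "lower_dens A = 0" "(\<eta>::real) > 0"
  shows "\<exists>N\<ge>N0. N \<ge> 1 \<and> real (card (A \<inter> {1..N})) \<le> \<eta> * N"
proof (rule ccontr)
  define f where "f N = ereal (real (card (A \<inter> {1..N})) / real N)" for N
  assume "\<not> ?thesis"
  hence H: "\<And>N. N \<ge> max N0 1 \<Longrightarrow> \<eta> * N < real (card (A \<inter> {1..N}))"
    by (metis max.bounded_iff not_le)
  have "\<eta> < real (card (A \<inter> {1..N})) / real N" if "N \<ge> max N0 1" for N
    using H[OF that] that by (simp add: less_divide_eq)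
  hence ev: "eventually (\<lambda>N. ereal \<eta> < f N) sequentially"
    unfolding f_def eventually_sequentially by (auto intro!: exI[of _ "max N0 1"])
  have "ereal \<eta> \<le> liminf f"
    by (rule Liminf_bounded) (use ev in \<open>auto elim: eventually_mono\<close>)
  hence "ereal \<eta> \<le> 0" using assms(1) unfolding lower_dens_def f_def by simp
  with assms(2) show False by simp
qed

lemma upper_one_nonempty:
  assumes "upper_dens A = 1" shows "A \<noteq> {}"
proof
  assume "A = {}"
  hence "upper_dens A = limsup (\<lambda>N. ereal 0)" unfolding upper_dens_def by simp
  also have "\<dots> = 0" by (simp add: Limsup_const)
  finally show False using assms by simp
qed

lemma card_inter_shift:
  "real (card (A \<inter> {1..N})) \<le> real (card (B \<inter> {1..N})) + real L0"
  if "\<And>j. j \<ge> L0 \<Longrightarrow> j \<in> A \<Longrightarrow> j \<in> B"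
proof -
  have "A \<inter> {1..N} \<subseteq> (B \<inter> {1..N}) \<union> {..<L0}" using that by force
  hence "card (A \<inter> {1..N}) \<le> card ((B \<inter> {1..N}) \<union> {..<L0})" by (rule card_mono[rotated]) auto
  also have "\<dots> \<le> card (B \<inter> {1..N}) + card {..<L0}" by (rule card_Un_le)
  finally show ?thesis by simp
qed

lemma freq_dense_mono:
  assumes "freq_dense A" "\<And>j. j \<ge> L0 \<Longrightarrow> j \<in> A \<Longrightarrow> j \<in> B"
  shows "freq_dense B"
  unfolding freq_dense_def
proof (intro allI impI)
  fix \<eta> :: real and N0 assume "\<eta> > 0"
  obtain N1 :: nat where N1: "real N1 \<ge> 2 * L0 / \<eta>" using real_arch_simple by blast
  obtain N where N: "N \<ge> max N0 N1" "N \<ge> 1" "real (card (A \<inter> {1..N})) \<ge> (1 - \<eta>/2) * N"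
  proof -
    have "\<eta>/2 > 0" using \<open>\<eta> > 0\<close> by simp
    from assms(1)[unfolded freq_dense_def, rule_format, OF this, of "max N0 N1"] show ?thesis using that by blast
  qed
  have "real N \<ge> 2 * L0 / \<eta>" using N1 N by linarith
  hence L: "real L0 \<le> \<eta> / 2 * N" using \<open>\<eta> > 0\<close> by (simp add: field_simps)
  have "real (card (A \<inter> {1..N})) \<le> real (card (B \<inter> {1..N})) + real L0"
    by (rule card_inter_shift) (use assms(2) in auto)
  hence "(1 - \<eta>) * N \<le> real (card (B \<inter> {1..N}))" using N(3) L by (simp add: algebra_simps)
  then show "\<exists>N\<ge>N0. N \<ge> 1 \<and> (1 - \<eta>) * real N \<le> real (card (B \<inter> {1..N}))" using N by auto
qed

lemma freq_dense_compl_sparse: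
  assumes "freq_dense B" "\<And>j. j \<ge> L0 \<Longrightarrow> j \<in> A \<Longrightarrow> j \<notin> B"
  shows "freq_sparse A"
  unfolding freq_sparse_def
proof (intro allI impI)
  fix \<eta> :: real and N0 assume "\<eta> > 0"
  obtain N1 :: nat where N1: "real N1 \<ge> 2 * L0 / \<eta>" using real_arch_simple by blast
  obtain N where N: "N \<ge> max N0 N1" "N \<ge> 1" "real (card (B \<inter> {1..N})) \<ge> (1 - \<eta>/2) * N"
  proof -
    have "\<eta>/2 > 0" using \<open>\<eta> > 0\<close> by simp
    from assms(1)[unfolded freq_dense_def, rule_format, OF this, of "max N0 N1"] show ?thesis using that by blast
  qed
  have "real N \<ge> 2 * L0 / \<eta>" using N1 N by linarith
  hence L: "real L0 \<le> \<eta> / 2 * N" using \<open>\<eta> > 0\<close> by (simp add: field_simps)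
  have "real (card (A \<inter> {1..N})) \<le> real (card ((- B) \<inter> {1..N})) + L0"
    by (rule card_inter_shift) (use assms(2) in auto)
  also have "(- B) \<inter> {1..N} = {1..N} - (B \<inter> {1..N})" by auto
  also have "card \<dots> = N - card (B \<inter> {1..N})" by (subst card_Diff_subset) auto
  also have "real \<dots> = real N - real (card (B \<inter> {1..N}))"
  proof -
    have "card (B \<inter> {1..N}) \<le> card {1..N}" by (intro card_mono) auto
    thus ?thesis by (simp add: of_nat_diff)
  qed
  finally have "real (card (A \<inter> {1..N})) \<le> \<eta> * N" using N(3) L by (simp add: algebra_simps)
  then show "\<exists>N\<ge>N0. N \<ge> 1 \<and> real (card (A \<inter> {1..N})) \<le> \<eta> * real N" using N by auto
qed


lemma card_split_ivl:
  assumes "j \<le> t"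
  shows "card {n\<in>{1..t}. P n} = card {n\<in>{1..j}. P n} + card {n\<in>{Suc j..t}. P n}"
proof -
  have "{n\<in>{1..t}. P n} = {n\<in>{1..j}. P n} \<union> {n\<in>{Suc j..t}. P n}" using assms by auto
  moreover have "{n\<in>{1..j}. P n} \<inter> {n\<in>{Suc j..t}. P n} = {}" by auto
  ultimately show ?thesis by (simp add: card_Un_disjoint)
qed

lemma card_shift_ivl:
  "card {n\<in>{Suc j..t}. P n} = card {i\<in>{1..t - j}. P (j + i)}"
proof -
  have "{n\<in>{Suc j..t}. P n} = (\<lambda>i. j + i) ` {i\<in>{1..t - j}. P (j + i)}"
  proof (intro set_eqI iffI)
    fix n assume "n \<in> {n\<in>{Suc j..t}. P n}"
    then show "n \<in> (\<lambda>i. j + i) ` {i\<in>{1..t - j}. P (j + i)}"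
      by (intro image_eqI[of _ _ "n - j"]) auto
  qed auto
  moreover have "inj (\<lambda>i::nat. j + i)" by (simp add: inj_def)
  ultimately show ?thesis by (simp add: card_image inj_on_def)
qed

lemma boost:
  fixes R :: "nat \<Rightarrow> real" and M K \<eta> \<epsilon> :: real and m tmin N :: nat
  assumes R0: "\<And>n. 0 \<le> R n" and RM: "\<And>n. R (Suc n) \<le> M * R n" and M1: "1 \<le> M"
    and K: "M ^ tmin < K" and \<eta>: "0 < \<eta>" "\<eta> < 1" and m: "(1 - \<eta>) ^ m < \<epsilon>"
    and Rpos: "R 0 > 0" and N: "N \<ge> 1"
    and cnt: "real (card {n\<in>{1..N}. K ^ m * R 0 \<le> R n}) \<ge> \<epsilon> * N"
  shows "\<exists>s t. t \<ge> tmin \<and> R s > 0 \<and> real (card {n\<in>{1..t}. K * R s \<le> R (s + n)}) \<ge> (1 - \<eta>) * t"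
proof (rule ccontr)
  assume "\<not> ?thesis"
  hence H: "\<And>s t. t \<ge> tmin \<Longrightarrow> R s > 0 \<Longrightarrow> real (card {n\<in>{1..t}. K * R s \<le> R (s + n)}) < (1 - \<eta>) * t"
    by (meson not_le)
  have grow: "R (s + n) \<le> M ^ n * R s" for s n
  proof (induction n)
    case 0 then show ?case by simp
  next
    case (Suc n)
    have "R (s + Suc n) \<le> M * R (s + n)" using RM[of "s + n"] by simp
    also have "\<dots> \<le> M * (M ^ n * R s)" using Suc M1 by (intro mult_left_mono) auto
    finally show ?case by (simp add: algebra_simps)
  qed
  have zero: "R (s + n) = 0" if "R s = 0" for s n
    using grow[of s n] R0[of "s + n"] that by simp
  have K1: "1 < K" using K M1 by (meson le_less_trans one_le_power)
  have claim: "\<forall>s t. R s > 0 \<longrightarrow> real (card {n\<in>{1..t}. K ^ k * R s \<le> R (s + n)}) \<le> (1 - \<eta>) ^ k * t" for k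
  proof (induction k)
    case 0
    show ?case
    proof (intro allI impI)
      fix s t
      have "card {n\<in>{1..t}. K ^ 0 * R s \<le> R (s + n)} \<le> card {1..t}" by (rule card_mono) auto
      thus "real (card {n\<in>{1..t}. K ^ 0 * R s \<le> R (s + n)}) \<le> (1 - \<eta>) ^ 0 * t" by simp
    qed
  next
    case (Suc k)
    define T where "T s t = card {n\<in>{1..t}. K ^ Suc k * R s \<le> R (s + n)}" for s t
    define G where "G s t = card {n\<in>{1..t}. K * R s \<le> R (s + n)}" for s t
    have sub: "R s > 0 \<longrightarrow> real (T s t) \<le> (1 - \<eta>) ^ k * G s t" for t s
    proof (induction t arbitrary: s rule: less_induct)
      case (less t)
      show ?case
      proof
        assume Rs: "R s > 0"
        define J where "J = {j\<in>{0..t}. R (s + j) < K * R s}"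
        have finJ: "finite J" unfolding J_def by auto
        have J0: "0 \<in> J" unfolding J_def using Rs K1 by simp
        define jm where "jm = Max J"
        have jmJ: "jm \<in> J" unfolding jm_def using finJ J0 by (intro Max_in) auto
        have jmt: "jm \<le> t" using jmJ unfolding J_def by auto
        have jmR: "R (s + jm) < K * R s" using jmJ unfolding J_def by auto
        have after: "K * R s \<le> R (s + n)" if "jm < n" "n \<le> t" for n
        proof (rule ccontr)
          assume "\<not> ?thesis"
          hence "n \<in> J" unfolding J_def using that by auto
          hence "n \<le> jm" unfolding jm_def using finJ by (intro Max_ge) auto
          with that show False by simp
        qed
        have KK: "K * R s \<le> K ^ Suc k * R s"
        proof -
          have "K \<le> K ^ Suc k" using K1 by (metis Suc_le_mono le_add1 one_le_power plus_1_eq_Suc power_increasing less_imp_le power_one_right)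
          thus ?thesis using Rs by (intro mult_right_mono) auto
        qed
        show "real (T s t) \<le> (1 - \<eta>) ^ k * G s t"
        proof (cases "jm = t")
          case True
          show ?thesis
          proof (cases t)
            case 0 then show ?thesis by (simp add: T_def G_def)
          next
            case (Suc t')
            have nT: "\<not> K ^ Suc k * R s \<le> R (s + t)" using jmR KK True by simp
            have nG: "\<not> K * R s \<le> R (s + t)" using jmR True by simp
            have e1: "{n\<in>{Suc t'..t}. K ^ Suc k * R s \<le> R (s + n)} = {}"
              using nT Suc by (auto simp: le_Suc_eq)
            have e2: "{n\<in>{Suc t'..t}. K * R s \<le> R (s + n)} = {}"
              using nG Suc by (auto simp: le_Suc_eq)
            have "T s t = T s t' + card {n\<in>{Suc t'..t}. K ^ Suc k * R s \<le> R (s + n)}"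
              unfolding T_def by (rule card_split_ivl) (simp add: Suc)
            hence "T s t = T s t'" using e1 by simp
            moreover have "G s t = G s t' + card {n\<in>{Suc t'..t}. K * R s \<le> R (s + n)}"
              unfolding G_def by (rule card_split_ivl) (simp add: Suc)
            hence "G s t = G s t'" using e2 by simp
            moreover have "real (T s t') \<le> (1 - \<eta>) ^ k * G s t'" using less[of t'] Suc Rs by simp
            ultimately show ?thesis by simp
          qed
        next
          case False
          hence jlt: "jm < t" using jmt by simp
          have Rjm: "R (s + jm) > 0"
          proof (rule ccontr)
            assume "\<not> ?thesis"
            hence "R (s + jm) = 0" using R0[of "s + jm"] by simp
            hence "R (s + jm + (t - jm)) = 0" by (rule zero)
            hence "R (s + t) = 0" using jlt by simp
            moreover have "K * R s \<le> R (s + t)" using after[of t] jlt by simp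
            moreover have "K * R s > 0" using Rs K1 by simp
            ultimately show False by linarith
          qed
          have split_T: "T s t = T s jm + card {i\<in>{1..t - jm}. K ^ Suc k * R s \<le> R (s + (jm + i))}"
          proof -
            have "T s t = T s jm + card {n\<in>{Suc jm..t}. K ^ Suc k * R s \<le> R (s + n)}"
              unfolding T_def by (rule card_split_ivl) (use jlt in simp)
            also have "card {n\<in>{Suc jm..t}. K ^ Suc k * R s \<le> R (s + n)}
                = card {i\<in>{1..t - jm}. K ^ Suc k * R s \<le> R (s + (jm + i))}"
              by (rule card_shift_ivl)
            finally show ?thesis .
          qed
          have split_G: "G s t = G s jm + card {i\<in>{1..t - jm}. K * R s \<le> R (s + (jm + i))}"
          proof -
            have "G s t = G s jm + card {n\<in>{Suc jm..t}. K * R s \<le> R (s + n)}"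
              unfolding G_def by (rule card_split_ivl) (use jlt in simp)
            also have "card {n\<in>{Suc jm..t}. K * R s \<le> R (s + n)}
                = card {i\<in>{1..t - jm}. K * R s \<le> R (s + (jm + i))}"
              by (rule card_shift_ivl)
            finally show ?thesis .
          qed
          have allG: "{i\<in>{1..t - jm}. K * R s \<le> R (s + (jm + i))} = {1..t - jm}"
            using after jlt by auto
          have sub2: "{i\<in>{1..t - jm}. K ^ Suc k * R s \<le> R (s + (jm + i))}
              \<subseteq> {i\<in>{1..t - jm}. K ^ k * R (s + jm) \<le> R (s + jm + i)}"
          proof (intro subsetI)
            fix i assume "i \<in> {i\<in>{1..t - jm}. K ^ Suc k * R s \<le> R (s + (jm + i))}"
            hence i: "1 \<le> i" "i \<le> t - jm" "K ^ Suc k * R s \<le> R (s + (jm + i))" by auto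
            have "K ^ k * R (s + jm) \<le> K ^ k * (K * R s)"
              using jmR K1 by (intro mult_left_mono) auto
            also have "\<dots> = K ^ Suc k * R s" by simp
            finally have "K ^ k * R (s + jm) \<le> R (s + jm + i)" using i(3) by (simp add: add.assoc)
            thus "i \<in> {i\<in>{1..t - jm}. K ^ k * R (s + jm) \<le> R (s + jm + i)}" using i by auto
          qed
          have "real (card {i\<in>{1..t - jm}. K ^ Suc k * R s \<le> R (s + (jm + i))})
              \<le> real (card {i\<in>{1..t - jm}. K ^ k * R (s + jm) \<le> R (s + jm + i)})"
            using sub2 by (intro of_nat_mono card_mono) auto
          also have "\<dots> \<le> (1 - \<eta>) ^ k * real (t - jm)" using Suc.IH Rjm by blast
          finally have p2: "real (card {i\<in>{1..t - jm}. K ^ Suc k * R s \<le> R (s + (jm + i))})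
              \<le> (1 - \<eta>) ^ k * real (t - jm)" .
          have p1: "real (T s jm) \<le> (1 - \<eta>) ^ k * G s jm" using less[OF jlt] Rs by simp
          have "real (T s t) \<le> (1 - \<eta>) ^ k * G s jm + (1 - \<eta>) ^ k * real (t - jm)"
            using p1 p2 split_T by simp
          also have "\<dots> = (1 - \<eta>) ^ k * G s t" using split_G allG by (simp add: algebra_simps)
          finally show ?thesis .
        qed
      qed
    qed
    show ?case
    proof (intro allI impI)
      fix s t assume Rs: "R s > 0"
      show "real (card {n\<in>{1..t}. K ^ Suc k * R s \<le> R (s + n)}) \<le> (1 - \<eta>) ^ Suc k * t"
      proof (cases "t \<ge> tmin")
        case True
        have "real (T s t) \<le> (1 - \<eta>) ^ k * G s t" using sub Rs by blast
        also have "\<dots> \<le> (1 - \<eta>) ^ k * ((1 - \<eta>) * t)"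
          using H[OF True Rs] \<eta> unfolding G_def by (intro mult_left_mono) auto
        also have "\<dots> = (1 - \<eta>) ^ Suc k * t" by (simp add: algebra_simps)
        finally show ?thesis unfolding T_def .
      next
        case False
        have "{n\<in>{1..t}. K ^ Suc k * R s \<le> R (s + n)} = {}"
        proof (rule ccontr)
          assume "\<not> ?thesis"
          then obtain n where n: "1 \<le> n" "n \<le> t" "K ^ Suc k * R s \<le> R (s + n)" by auto
          have "R (s + n) \<le> M ^ n * R s" by (rule grow)
          also have "\<dots> \<le> M ^ tmin * R s" using M1 n False Rs by (intro mult_right_mono power_increasing) auto
          also have "\<dots> < K * R s" using K Rs by simp
          also have "K \<le> K ^ Suc k" using K1 by (metis Suc_le_mono le_add1 one_le_power plus_1_eq_Suc power_increasing less_imp_le power_one_right)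
          hence "K * R s \<le> K ^ Suc k * R s" using Rs by (intro mult_right_mono) auto
          finally show False using n(3) by simp
        qed
        hence "real (card {n\<in>{1..t}. K ^ Suc k * R s \<le> R (s + n)}) = 0" by (simp only: card.empty of_nat_0)
        moreover have "0 \<le> (1 - \<eta>) ^ Suc k * real t" using \<eta> by simp
        ultimately show ?thesis by linarith
      qed
    qed
  qed
  have "real (card {n\<in>{1..N}. K ^ m * R 0 \<le> R (0 + n)}) \<le> (1 - \<eta>) ^ m * N"
    using claim Rpos by blast
  also have "\<dots> < \<epsilon> * N" using m N by (intro mult_strict_right_mono) auto
  finally show False using cnt by simp
qed


lemma sum_vext:
  fixes a :: "nat \<Rightarrow> real"
  shows "(\<Sum>j\<in>{1..n + U}. a j * vext v (int j - int n)) = (\<Sum>m\<in>{1..U}. a (m + n) * v m)"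
proof -
  have "(\<Sum>j\<in>{1..n + U}. a j * vext v (int j - int n))
      = (\<Sum>j\<in>{1..n}. a j * vext v (int j - int n)) + (\<Sum>j\<in>{n + 1..n + U}. a j * vext v (int j - int n))"
    by (rule sum.ub_add_nat) simp
  also have "(\<Sum>j\<in>{1..n}. a j * vext v (int j - int n)) = 0"
    by (intro sum.neutral) (auto simp: vext_def)
  also have "(\<Sum>j\<in>{n + 1..n + U}. a j * vext v (int j - int n)) = (\<Sum>j\<in>{1 + n..U + n}. a j * vext v (int j - int n))"
    by (simp add: add.commute)
  also have "\<dots> = (\<Sum>m\<in>{1..U}. a (m + n) * vext v (int (m + n) - int n))"
    by (rule sum.shift_bounds_cl_nat_ivl)
  also have "\<dots> = (\<Sum>m\<in>{1..U}. a (m + n) * v m)"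
    by (intro sum.cong) (auto simp: vext_def)
  finally show ?thesis by simp
qed

context wsh
begin

definition V :: "(nat \<Rightarrow> real) \<Rightarrow> nat \<Rightarrow> real" where
  "V a n = (\<Sum>m. (if m = 0 then 0 else a (m + n)) * v m)"

definition vec :: "(nat \<Rightarrow> real) \<Rightarrow> nat \<Rightarrow> complex" where
  "vec a = (\<lambda>m. if m = 0 then 0 else complex_of_real (a m powr (1 / p)))"

definition prof :: "(nat \<Rightarrow> real) \<Rightarrow> nat \<Rightarrow> bool" where
  "prof a U \<longleftrightarrow> (\<forall>j. 0 \<le> a j) \<and> a 0 = 0 \<and> (\<forall>j>U. a j = 0)"

lemma norm_vec_powr:
  assumes "0 \<le> r"
  shows "norm (complex_of_real (r powr (1 / p))) powr p = r"
  using assms p0 by (simp add: powr_powr powr_one)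

lemma Qf_vec:
  assumes "\<And>j. 0 \<le> a j"
  shows "Qf ((bshift ^^ n) (vec a)) = V a n"
proof -
  have "(bshift ^^ n) (vec a) = (\<lambda>m. if m = 0 then 0 else vec a (m + n))"
    by (rule bshift_pow) (simp add: vec_def)
  moreover have "(\<lambda>m. norm ((if m = 0 then 0 else vec a (m + n))) powr p * v m) = (\<lambda>m. (if m = 0 then 0 else a (m + n)) * v m)"
  proof (rule ext)
    fix m
    show "norm ((if m = 0 then 0 else vec a (m + n))) powr p * v m = (if m = 0 then 0 else a (m + n)) * v m"
      using norm_vec_powr[OF assms[of "m + n"]] by (auto simp: vec_def)
  qed
  ultimately show ?thesis unfolding Qf_def V_def by simp
qed

lemma V_fin:
  assumes "prof a U"
  shows "V a n = (\<Sum>m\<in>{1..U}. a (m + n) * v m)"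
proof -
  have "V a n = (\<Sum>m\<in>{1..U}. (if m = 0 then 0 else a (m + n)) * v m)"
    unfolding V_def using assms by (intro suminf_finite) (auto simp: prof_def)
  also have "\<dots> = (\<Sum>m\<in>{1..U}. a (m + n) * v m)" by (intro sum.cong) auto
  finally show ?thesis .
qed

lemma vec_in_X:
  assumes "prof a U"
  shows "vec a \<in> lpv_space p v"
proof -
  have "summable (\<lambda>n. norm (vec a n) powr p * v n)"
    by (rule summable_finite[of "{1..U}"]) (use assms in \<open>auto simp: vec_def prof_def\<close>)
  then show ?thesis by (simp add: inX vec_def)
qed

lemma V_nonneg:
  assumes "prof a U" shows "0 \<le> V a n"
proof -
  have "0 \<le> a (m + n) * v m" if "m \<in> {1..U}" for m
    using assms vpos[of m] that by (auto simp: prof_def)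
  thus ?thesis unfolding V_fin[OF assms] by (intro sum_nonneg) auto
qed

lemma V_growth:
  assumes "prof a U" shows "V a (Suc n) \<le> M * V a n"
proof -
  have a0: "\<And>j. 0 \<le> a j" using assms by (simp add: prof_def)
  have x: "(bshift ^^ n) (vec a) \<in> lpv_space p v" using Bn_in_X[OF vec_in_X[OF assms]] by blast
  have "V a (Suc n) = Qf (bshift ((bshift ^^ n) (vec a)))" using Qf_vec[OF a0, of "Suc n"] by simp
  also have "\<dots> \<le> M * Qf ((bshift ^^ n) (vec a))" using B_in_X[OF x] by blast
  also have "\<dots> = M * V a n" using Qf_vec[OF a0] by simp
  finally show ?thesis .
qed

lemma V_zero:
  assumes "prof a U" "U \<le> n" shows "V a n = 0"
  unfolding V_fin[OF assms(1)] using assms by (auto simp: prof_def intro!: sum.neutral)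

lemma V_shift:
  assumes "prof a U" "c > 0"
  shows "prof (\<lambda>j. if j = 0 then 0 else a (j + s) / c) U"
    and "V (\<lambda>j. if j = 0 then 0 else a (j + s) / c) n = V a (n + s) / c"
proof -
  show P: "prof (\<lambda>j. if j = 0 then 0 else a (j + s) / c) U"
    using assms by (auto simp: prof_def)
  have "V (\<lambda>j. if j = 0 then 0 else a (j + s) / c) n = (\<Sum>m\<in>{1..U}. (a (m + (n + s)) * v m) / c)"
    unfolding V_fin[OF P] by (intro sum.cong) (auto simp: algebra_simps)
  also have "\<dots> = V a (n + s) / c" unfolding V_fin[OF assms(1)] by (simp add: sum_divide_distrib)
  finally show "V (\<lambda>j. if j = 0 then 0 else a (j + s) / c) n = V a (n + s) / c" .
qed

lemma good_block:
  fixes \<epsilon> :: real and N :: "nat \<Rightarrow> nat" and S :: "nat \<Rightarrow> nat set" and C :: "nat \<Rightarrow> nat \<Rightarrow> complex"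
    and \<eta> K :: real and tmin :: nat
  assumes \<epsilon>: "\<epsilon> > 0" and N1: "\<forall>k\<ge>1. N k \<ge> 1"
    and SC: "\<forall>k\<ge>1. finite (S k) \<and> S k \<noteq> {} \<and> S k \<subseteq> {1..} \<and> (\<forall>j\<in>S k. C k j \<noteq> 0)"
    and cnt: "\<forall>k\<ge>1. real (card {n\<in>{1..N k}.
              (\<Sum>j\<in>S k. norm (C k j) * vext v (int j - int n)) /
              (\<Sum>j\<in>S k. norm (C k j) * v j) \<ge> real k}) \<ge> real (N k) * \<epsilon>"
    and \<eta>: "0 < \<eta>" "\<eta> < 1"
  shows "\<exists>a U t. prof a U \<and> t \<ge> tmin \<and> V a 0 = 1 \<and> real (card {n\<in>{1..t}. K \<le> V a n}) \<ge> (1 - \<eta>) * t"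
proof -
  define K0 where "K0 = max K (M ^ tmin + 1)"
  have K0: "M ^ tmin < K0" "K \<le> K0" unfolding K0_def by auto
  obtain m where m: "(1 - \<eta>) ^ m < \<epsilon>" using real_arch_pow_inv[OF \<epsilon>, of "1 - \<eta>"] \<eta> by auto
  obtain k0 :: nat where k0: "K0 ^ m \<le> real k0" using real_arch_simple by blast
  define k where "k = max k0 1"
  have k1: "k \<ge> 1" and kK: "K0 ^ m \<le> real k" using k0 unfolding k_def by auto
  have Sk: "finite (S k)" "S k \<noteq> {}" "S k \<subseteq> {1..}" "\<And>j. j \<in> S k \<Longrightarrow> C k j \<noteq> 0"
    using SC k1 by auto
  define a where "a j = (if j \<in> S k then norm (C k j) else 0)" for j
  define U where "U = Max (S k)"
  have SU: "S k \<subseteq> {1..U}" using Sk unfolding U_def by auto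
  have pa: "prof a U" unfolding prof_def a_def using Sk SU by auto
  define R where "R n = V a n" for n
  have Rsum: "(\<Sum>j\<in>S k. norm (C k j) * vext v (int j - int n)) = R n" for n
  proof -
    have "(\<Sum>j\<in>S k. norm (C k j) * vext v (int j - int n)) = (\<Sum>j\<in>S k. a j * vext v (int j - int n))"
      by (intro sum.cong) (auto simp: a_def)
    also have "\<dots> = (\<Sum>j\<in>{1..n + U}. a j * vext v (int j - int n))"
      by (intro sum.mono_neutral_left) (use SU in \<open>auto simp: a_def\<close>)
    also have "\<dots> = (\<Sum>m\<in>{1..U}. a (m + n) * v m)" by (rule sum_vext)
    also have "\<dots> = R n" unfolding R_def V_fin[OF pa] ..
    finally show ?thesis .
  qed
  have R0eq: "(\<Sum>j\<in>S k. norm (C k j) * v j) = R 0"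
  proof -
    have "(\<Sum>j\<in>S k. norm (C k j) * v j) = (\<Sum>j\<in>S k. norm (C k j) * vext v (int j - int 0))"
      by (intro sum.cong) (use Sk in \<open>auto simp: vext_def\<close>)
    thus ?thesis using Rsum[of 0] by simp
  qed
  have R0pos: "R 0 > 0"
  proof -
    have "0 < (\<Sum>j\<in>S k. norm (C k j) * v j)"
      using Sk vpos by (intro sum_pos) auto
    thus ?thesis using R0eq by simp
  qed
  have Rnn: "0 \<le> R n" for n unfolding R_def by (rule V_nonneg[OF pa])
  have RM: "R (Suc n) \<le> M * R n" for n unfolding R_def by (rule V_growth[OF pa])
  have cntR: "real (card {n\<in>{1..N k}. K0 ^ m * R 0 \<le> R n}) \<ge> \<epsilon> * N k"
  proof -
    have "{n\<in>{1..N k}. (\<Sum>j\<in>S k. norm (C k j) * vext v (int j - int n)) /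
              (\<Sum>j\<in>S k. norm (C k j) * v j) \<ge> real k} \<subseteq> {n\<in>{1..N k}. K0 ^ m * R 0 \<le> R n}"
    proof (intro subsetI)
      fix n assume "n \<in> {n\<in>{1..N k}. (\<Sum>j\<in>S k. norm (C k j) * vext v (int j - int n)) /
              (\<Sum>j\<in>S k. norm (C k j) * v j) \<ge> real k}"
      hence n: "n \<in> {1..N k}" "R n / R 0 \<ge> real k" using Rsum R0eq by auto
      hence "real k * R 0 \<le> R n" using R0pos by (simp add: le_divide_eq)
      moreover have "K0 ^ m * R 0 \<le> real k * R 0" using kK R0pos by (intro mult_right_mono) auto
      ultimately show "n \<in> {n\<in>{1..N k}. K0 ^ m * R 0 \<le> R n}" using n by auto
    qed
    hence "card {n\<in>{1..N k}. (\<Sum>j\<in>S k. norm (C k j) * vext v (int j - int n)) /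
              (\<Sum>j\<in>S k. norm (C k j) * v j) \<ge> real k} \<le> card {n\<in>{1..N k}. K0 ^ m * R 0 \<le> R n}"
      by (intro card_mono) auto
    hence "real (card {n\<in>{1..N k}. (\<Sum>j\<in>S k. norm (C k j) * vext v (int j - int n)) /
              (\<Sum>j\<in>S k. norm (C k j) * v j) \<ge> real k}) \<le> real (card {n\<in>{1..N k}. K0 ^ m * R 0 \<le> R n})"
      by (rule of_nat_mono)
    moreover have "real (N k) * \<epsilon> \<le> real (card {n\<in>{1..N k}. (\<Sum>j\<in>S k. norm (C k j) * vext v (int j - int n)) /
              (\<Sum>j\<in>S k. norm (C k j) * v j) \<ge> real k})" using cnt k1 by blast
    ultimately show ?thesis by (simp add: mult.commute)
  qed
  obtain s t where st: "t \<ge> tmin" "R s > 0" "real (card {n\<in>{1..t}. K0 * R s \<le> R (s + n)}) \<ge> (1 - \<eta>) * t"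
  proof -
    have "N k \<ge> 1" using N1 k1 by blast
    from boost[OF Rnn RM M1 K0(1) \<eta>(1) \<eta>(2) m R0pos this cntR] show ?thesis using that by blast
  qed
  define a' where "a' = (\<lambda>j. if j = 0 then 0 else a (j + s) / R s)"
  have pa': "prof a' U" unfolding a'_def by (rule V_shift(1)[OF pa st(2)])
  have Va': "V a' n = R (n + s) / R s" for n unfolding a'_def R_def by (rule V_shift(2)[OF pa st(2)[unfolded R_def]])
  have "{n\<in>{1..t}. K0 * R s \<le> R (s + n)} \<subseteq> {n\<in>{1..t}. K \<le> V a' n}"
  proof (intro subsetI)
    fix n assume "n \<in> {n\<in>{1..t}. K0 * R s \<le> R (s + n)}"
    hence n: "n \<in> {1..t}" "K0 * R s \<le> R (s + n)" by auto
    hence "K0 \<le> R (n + s) / R s" using st(2) by (simp add: le_divide_eq add.commute)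
    thus "n \<in> {n\<in>{1..t}. K \<le> V a' n}" using n K0(2) Va' by auto
  qed
  hence "card {n\<in>{1..t}. K0 * R s \<le> R (s + n)} \<le> card {n\<in>{1..t}. K \<le> V a' n}"
    by (intro card_mono) auto
  hence "real (card {n\<in>{1..t}. K \<le> V a' n}) \<ge> (1 - \<eta>) * t" using st(3) by linarith
  moreover have "V a' 0 = 1" using Va'[of 0] st(2) by simp
  ultimately show ?thesis using pa' st(1) by blast
qed

end

lemma double_suminf_le:
  fixes g :: "nat \<Rightarrow> nat \<Rightarrow> real"
  assumes g0: "\<And>i m. 0 \<le> g i m" and sm: "\<And>m. summable (\<lambda>i. g i m)" and si: "\<And>i. summable (g i)"
    and s: "summable (\<lambda>i. \<Sum>m. g i m)"
  shows "summable (\<lambda>m. \<Sum>i. g i m) \<and> (\<Sum>m. \<Sum>i. g i m) \<le> (\<Sum>i. \<Sum>m. g i m)"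
proof -
  have part: "(\<Sum>m<T. \<Sum>i. g i m) \<le> (\<Sum>i. \<Sum>m. g i m)" for T
  proof -
    have "(\<Sum>m<T. \<Sum>i. g i m) = (\<Sum>i. \<Sum>m<T. g i m)"
      using suminf_sum[of "{..<T}" "\<lambda>m i. g i m"] sm by simp
    also have "\<dots> \<le> (\<Sum>i. \<Sum>m. g i m)"
    proof (rule suminf_le)
      show "(\<Sum>m<T. g i m) \<le> (\<Sum>m. g i m)" for i
        using si g0 by (intro sum_le_suminf) auto
      show "summable (\<lambda>i. \<Sum>m<T. g i m)"
        using sm by (intro summable_sum) auto
    qed (rule s)
    finally show ?thesis .
  qed
  have nn: "0 \<le> (\<Sum>i. g i m)" for m using sm g0 by (intro suminf_nonneg) auto
  have sum: "summable (\<lambda>m. \<Sum>i. g i m)"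
  proof (rule bounded_imp_summable[OF nn])
    fix n
    show "(\<Sum>k\<le>n. \<Sum>i. g i k) \<le> (\<Sum>i. \<Sum>m. g i m)"
      using part[of "Suc n"] by (simp add: lessThan_Suc_atMost)
  qed
  moreover have "(\<Sum>m. \<Sum>i. g i m) \<le> (\<Sum>i. \<Sum>m. g i m)"
    by (rule suminf_le_const[OF sum part])
  ultimately show ?thesis by blast
qed

context wsh
begin

definition GBprop :: bool where
  "GBprop \<longleftrightarrow> (\<forall>K \<eta> tmin. 0 < \<eta> \<and> \<eta> < 1 \<longrightarrow>
     (\<exists>a U t. prof a U \<and> t \<ge> tmin \<and> V a 0 = 1 \<and> real (card {n\<in>{1..t}. K \<le> V a n}) \<ge> (1 - \<eta>) * real t))"

definition \<beta>f :: "nat \<Rightarrow> nat \<Rightarrow> real" where "\<beta>f i P = (1/4) ^ Suc i / M ^ P"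
definition Kf :: "nat \<Rightarrow> nat \<Rightarrow> real" where "Kf i P = real (Suc i) / \<beta>f i P"

definition blk :: "nat \<Rightarrow> nat \<Rightarrow> (nat \<Rightarrow> real) \<times> nat \<times> nat" where
  "blk i P = (SOME b. prof (fst b) (fst (snd b)) \<and> snd (snd b) \<ge> Suc i \<and> V (fst b) 0 = 1 \<and>
      real (card {n\<in>{1..snd (snd b)}. Kf i P \<le> V (fst b) n}) \<ge> (1 - 1 / real (i + 2)) * real (snd (snd b)))"

fun Pseq :: "nat \<Rightarrow> nat" where
  "Pseq 0 = 0"
| "Pseq (Suc i) = (i + 2) * (max (Pseq i) (fst (snd (blk i (Pseq i)))) + 1)"

definition ai :: "nat \<Rightarrow> nat \<Rightarrow> real" where "ai i = fst (blk i (Pseq i))"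
definition Ui :: "nat \<Rightarrow> nat" where "Ui i = fst (snd (blk i (Pseq i)))"
definition ti :: "nat \<Rightarrow> nat" where "ti i = snd (snd (blk i (Pseq i)))"
definition \<beta>i :: "nat \<Rightarrow> real" where "\<beta>i i = \<beta>f i (Pseq i)"
definition \<Lambda> :: "nat \<Rightarrow> nat" where "\<Lambda> i = max (Pseq i) (Ui i)"
definition Y :: "nat \<Rightarrow> real" where "Y m = (\<Sum>i. \<beta>i i * ai i m)"

lemma Pseq_Suc: "Pseq (Suc i) = (i + 2) * (\<Lambda> i + 1)"
  by (simp add: \<Lambda>_def Ui_def)

lemma Pseq_le_Suc: "Pseq i \<le> Pseq (Suc i)"
proof -
  have "Pseq i \<le> \<Lambda> i" by (simp add: \<Lambda>_def)
  also have "\<dots> \<le> (i + 2) * (\<Lambda> i + 1)" by simp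
  finally show ?thesis by (simp add: Pseq_Suc)
qed

lemma Pseq_mono: "i \<le> j \<Longrightarrow> Pseq i \<le> Pseq j"
  using lift_Suc_mono_le[of Pseq, OF Pseq_le_Suc] by blast

lemma Ui_le_\<Lambda>: assumes "j \<le> i" shows "Ui j \<le> \<Lambda> i"
proof (cases "j = i")
  case True then show ?thesis by (simp add: \<Lambda>_def)
next
  case False
  hence "Suc j \<le> i" using assms by simp
  have "Ui j \<le> \<Lambda> j" by (simp add: \<Lambda>_def)
  also have "\<dots> \<le> Pseq (Suc j)" unfolding Pseq_Suc by simp
  also have "\<dots> \<le> Pseq i" by (rule Pseq_mono[OF \<open>Suc j \<le> i\<close>])
  also have "\<dots> \<le> \<Lambda> i" by (simp add: \<Lambda>_def)
  finally show ?thesis .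
qed

lemma \<beta>i_pos: "0 < \<beta>i i" using M1 by (simp add: \<beta>i_def \<beta>f_def)

lemma \<beta>i_le: "\<beta>i i \<le> (1/4) ^ Suc i"
proof -
  have "1 \<le> M ^ Pseq i" using M1 by (simp add: one_le_power)
  thus ?thesis unfolding \<beta>i_def \<beta>f_def by (simp add: divide_le_eq_1 field_simps)
qed

lemma blk_prop:
  assumes GB: GBprop
  shows "prof (ai i) (Ui i) \<and> ti i \<ge> Suc i \<and> V (ai i) 0 = 1 \<and>
      real (card {n\<in>{1..ti i}. Kf i (Pseq i) \<le> V (ai i) n}) \<ge> (1 - 1 / real (i + 2)) * real (ti i)"
proof -
  have "0 < 1 / real (i + 2)" "1 / real (i + 2) < (1::real)" by auto
  then obtain a U t where "prof a U" "t \<ge> Suc i" "V a 0 = 1"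
     "real (card {n\<in>{1..t}. Kf i (Pseq i) \<le> V a n}) \<ge> (1 - 1 / real (i + 2)) * real t"
    using GB unfolding GBprop_def by blast
  hence ex: "\<exists>b. prof (fst b) (fst (snd b)) \<and> snd (snd b) \<ge> Suc i \<and> V (fst b) 0 = 1 \<and>
      real (card {n\<in>{1..snd (snd b)}. Kf i (Pseq i) \<le> V (fst b) n}) \<ge> (1 - 1 / real (i + 2)) * real (snd (snd b))"
    by (intro exI[of _ "(a, U, t)"]) auto
  show ?thesis using someI_ex[OF ex] unfolding ai_def Ui_def ti_def blk_def by blast
qed

lemma V_pow:
  assumes "prof a U" shows "V a n \<le> M ^ n * V a 0"
proof (induction n)
  case 0 then show ?case by simp
next
  case (Suc n)
  have "V a (Suc n) \<le> M * V a n" by (rule V_growth[OF assms])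
  also have "\<dots> \<le> M * (M ^ n * V a 0)" using Suc M1 by (intro mult_left_mono) auto
  finally show ?case by simp
qed

lemma single_le_V0:
  assumes "prof a U" "1 \<le> m" shows "a m * v m \<le> V a 0"
proof (cases "m \<le> U")
  case True
  have "a m * v m = a (m + 0) * v m" by simp
  also have "\<dots> \<le> (\<Sum>m'\<in>{1..U}. a (m' + 0) * v m')"
  proof (rule member_le_sum)
    show "m \<in> {1..U}" using True assms by auto
    show "0 \<le> a (x + 0) * v x" if "x \<in> {1..U} - {m}" for x
      using assms(1) vpos[of x] that by (auto simp: prof_def)
  qed auto
  finally show ?thesis using V_fin[OF assms(1), of 0] by simp
next
  case False
  hence "a m = 0" using assms by (auto simp: prof_def)
  thus ?thesis using V_nonneg[OF assms(1)] by simp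
qed

lemma ai_nonneg: "GBprop \<Longrightarrow> 0 \<le> ai i m"
  using blk_prop[of i] by (auto simp: prof_def)

lemma ai_0: "GBprop \<Longrightarrow> ai i 0 = 0"
  using blk_prop[of i] by (auto simp: prof_def)

lemma ai_bound:
  assumes GB: GBprop
  shows "ai i m \<le> (if m = 0 then 0 else 1 / v m)"
proof (cases "m = 0")
  case True then show ?thesis using ai_0[OF GB] by simp
next
  case False
  have "ai i m * v m \<le> V (ai i) 0" using single_le_V0[of "ai i" "Ui i" m] blk_prop[OF GB, of i] False by auto
  hence "ai i m * v m \<le> 1" using blk_prop[OF GB, of i] by simp
  thus ?thesis using False vpos[of m] by (simp add: le_divide_eq)
qed

lemma bai_nonneg: "GBprop \<Longrightarrow> 0 \<le> \<beta>i i * ai i m"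
  using \<beta>i_pos[of i] ai_nonneg[of i m] by simp

lemma Y_summ:
  assumes GB: GBprop
  shows "summable (\<lambda>i. \<beta>i i * ai i m)"
proof (rule summable_comparison_test[of _ "\<lambda>i. (1/4) ^ Suc i * (if m = 0 then 0 else 1 / v m)"])
  show "summable (\<lambda>i. (1/4) ^ Suc i * (if m = 0 then 0 else 1 / v m))"
    by (intro summable_mult2) (simp add: summable_geometric)
  have "norm (\<beta>i i * ai i m) \<le> (1/4) ^ Suc i * (if m = 0 then 0 else 1 / v m)" for i
  proof -
    have "norm (\<beta>i i * ai i m) = \<beta>i i * ai i m" using bai_nonneg[OF GB] by simp
    also have "\<dots> \<le> (1/4) ^ Suc i * (if m = 0 then 0 else 1 / v m)"
      using \<beta>i_le \<beta>i_pos ai_nonneg[OF GB] ai_bound[OF GB]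
      by (intro mult_mono) (auto simp: less_imp_le)
    finally show ?thesis .
  qed
  thus "\<exists>N. \<forall>n\<ge>N. norm (\<beta>i n * ai n m) \<le> (1/4) ^ Suc n * (if m = 0 then 0 else 1 / v m)" by blast
qed

lemma Y_nonneg: "GBprop \<Longrightarrow> 0 \<le> Y m"
  unfolding Y_def using Y_summ bai_nonneg by (intro suminf_nonneg) auto

lemma Y_0: "GBprop \<Longrightarrow> Y 0 = 0"
  unfolding Y_def using ai_0 by simp

lemma V_Y:
  assumes GB: GBprop
  shows "summable (\<lambda>m. (if m = 0 then 0 else Y (m + n)) * v m) \<and> summable (\<lambda>i. \<beta>i i * V (ai i) n)
      \<and> V Y n \<le> (\<Sum>i. \<beta>i i * V (ai i) n)"
proof -
  define g where "g i m = \<beta>i i * ((if m = 0 then 0 else ai i (m + n)) * v m)" for i m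
  have g0: "0 \<le> g i m" for i m
    unfolding g_def using \<beta>i_pos[of i] ai_nonneg[OF GB] vpos[of m] by (auto intro!: mult_nonneg_nonneg)
  have sm: "summable (\<lambda>i. g i m)" for m
  proof (cases "m = 0")
    case True then show ?thesis by (simp add: g_def)
  next
    case False
    show ?thesis unfolding g_def using False summable_mult2[OF Y_summ[OF GB, of "m + n"], of "v m"]
      by (simp add: mult.assoc)
  qed
  have pa: "prof (ai i) (Ui i)" for i using blk_prop[OF GB] by blast
  have sVi: "summable (\<lambda>m. (if m = 0 then 0 else ai i (m + n)) * v m)" for i
    by (rule summable_finite[of "{1..Ui i}"]) (use pa[of i] in \<open>auto simp: prof_def\<close>)
  have si: "summable (g i)" for i unfolding g_def by (rule summable_mult[OF sVi])
  have gi: "(\<Sum>m. g i m) = \<beta>i i * V (ai i) n" for i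
    unfolding g_def V_def by (rule suminf_mult[OF sVi])
  have sb: "summable (\<lambda>i. \<beta>i i * V (ai i) n)"
  proof (rule summable_comparison_test[of _ "\<lambda>i. (1/4) ^ Suc i * M ^ n"])
    show "summable (\<lambda>i. (1/4) ^ Suc i * M ^ n)"
      by (intro summable_mult2) (simp add: summable_geometric)
    have "norm (\<beta>i i * V (ai i) n) \<le> (1/4) ^ Suc i * M ^ n" for i
    proof -
      have Vn: "0 \<le> V (ai i) n" by (rule V_nonneg[OF pa])
      have "V (ai i) n \<le> M ^ n" using V_pow[OF pa[of i], of n] blk_prop[OF GB, of i] by simp
      hence "\<beta>i i * V (ai i) n \<le> (1/4) ^ Suc i * M ^ n"
        using \<beta>i_le[of i] \<beta>i_pos[of i] Vn by (intro mult_mono) auto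
      thus ?thesis using \<beta>i_pos[of i] Vn by simp
    qed
    thus "\<exists>N. \<forall>i\<ge>N. norm (\<beta>i i * V (ai i) n) \<le> (1/4) ^ Suc i * M ^ n" by blast
  qed
  have s: "summable (\<lambda>i. \<Sum>m. g i m)" using sb gi by simp
  have row: "(if m = 0 then 0 else Y (m + n)) * v m = (\<Sum>i. g i m)" for m
  proof (cases "m = 0")
    case True then show ?thesis by (simp add: g_def)
  next
    case False
    have "(\<Sum>i. g i m) = (\<Sum>i. \<beta>i i * ai i (m + n) * v m)"
      unfolding g_def using False by (simp add: mult.assoc)
    also have "\<dots> = Y (m + n) * v m" unfolding Y_def by (rule suminf_mult2[OF Y_summ[OF GB], symmetric])
    finally show ?thesis using False by simp
  qed
  from double_suminf_le[OF g0 sm si s]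
  have "summable (\<lambda>m. \<Sum>i. g i m) \<and> (\<Sum>m. \<Sum>i. g i m) \<le> (\<Sum>i. \<Sum>m. g i m)" .
  hence A: "summable (\<lambda>m. \<Sum>i. g i m)" and B: "(\<Sum>m. \<Sum>i. g i m) \<le> (\<Sum>i. \<Sum>m. g i m)" by auto
  have eqrow: "(\<lambda>m. (if m = 0 then 0 else Y (m + n)) * v m) = (\<lambda>m. \<Sum>i. g i m)"
    by (rule ext) (rule row)
  have eqcol: "(\<lambda>i. \<Sum>m. g i m) = (\<lambda>i. \<beta>i i * V (ai i) n)"
    by (rule ext) (rule gi)
  have "V Y n = (\<Sum>m. \<Sum>i. g i m)" unfolding V_def eqrow ..
  also have "\<dots> \<le> (\<Sum>i. \<Sum>m. g i m)" by (rule B)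
  also have "\<dots> = (\<Sum>i. \<beta>i i * V (ai i) n)" unfolding eqcol ..
  finally show ?thesis using A sb eqrow by simp
qed

lemma V_Y_lower:
  assumes GB: GBprop
  shows "\<beta>i j * V (ai j) n \<le> V Y n"
proof -
  have pa: "prof (ai j) (Ui j)" using blk_prop[OF GB] by blast
  have sVi: "summable (\<lambda>m. (if m = 0 then 0 else ai j (m + n)) * v m)"
    by (rule summable_finite[of "{1..Ui j}"]) (use pa in \<open>auto simp: prof_def\<close>)
  have "\<beta>i j * V (ai j) n = (\<Sum>m. \<beta>i j * ((if m = 0 then 0 else ai j (m + n)) * v m))"
    unfolding V_def by (rule suminf_mult[OF sVi, symmetric])
  also have "\<dots> \<le> V Y n" unfolding V_def
  proof (rule suminf_le)
    show "summable (\<lambda>m. \<beta>i j * ((if m = 0 then 0 else ai j (m + n)) * v m))"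
      by (rule summable_mult[OF sVi])
    show "summable (\<lambda>m. (if m = 0 then 0 else Y (m + n)) * v m)" using V_Y[OF GB] by blast
    fix m
    show "\<beta>i j * ((if m = 0 then 0 else ai j (m + n)) * v m) \<le> (if m = 0 then 0 else Y (m + n)) * v m"
    proof (cases "m = 0")
      case False
      have "\<beta>i j * ai j (m + n) \<le> Y (m + n)"
      proof -
        have "(\<Sum>i\<in>{j}. \<beta>i i * ai i (m + n)) \<le> (\<Sum>i. \<beta>i i * ai i (m + n))"
          using Y_summ[OF GB] bai_nonneg[OF GB]
          by (intro sum_le_suminf) auto
        thus ?thesis unfolding Y_def by simp
      qed
      hence "\<beta>i j * ai j (m + n) * v m \<le> Y (m + n) * v m"
        using vpos[of m] False by (intro mult_right_mono) auto
      thus ?thesis using False by (simp add: mult.assoc)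
    qed simp
  qed
  finally show ?thesis .
qed

end

context wsh
begin

lemma Y_big:
  assumes GB: GBprop
  shows "freq_dense {n. c \<le> V Y n}"
  unfolding freq_dense_def
proof (intro allI impI)
  fix \<eta> :: real and N0 :: nat assume \<eta>: "\<eta> > 0"
  define i where "i = max N0 (max (nat \<lceil>c\<rceil>) (nat \<lceil>1 / \<eta>\<rceil>))"
  have ic: "c \<le> real (Suc i)" unfolding i_def by linarith
  have "1 / \<eta> \<le> real i" unfolding i_def by linarith
  hence "1 / \<eta> \<le> real (i + 2)" by simp
  hence i\<eta>: "1 / real (i + 2) \<le> \<eta>" using \<eta> by (simp add: divide_le_eq field_simps)
  have iN0: "N0 \<le> i" unfolding i_def by simp
  have bp: "prof (ai i) (Ui i)" "ti i \<ge> Suc i" "V (ai i) 0 = 1"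
    "real (card {n\<in>{1..ti i}. Kf i (Pseq i) \<le> V (ai i) n}) \<ge> (1 - 1 / real (i + 2)) * real (ti i)"
    using blk_prop[OF GB, of i] by auto
  have sub: "{n\<in>{1..ti i}. Kf i (Pseq i) \<le> V (ai i) n} \<subseteq> {n. c \<le> V Y n} \<inter> {1..ti i}"
  proof (intro subsetI)
    fix n assume "n \<in> {n\<in>{1..ti i}. Kf i (Pseq i) \<le> V (ai i) n}"
    hence n: "n \<in> {1..ti i}" "Kf i (Pseq i) \<le> V (ai i) n" by auto
    have "real (Suc i) = \<beta>i i * Kf i (Pseq i)" using \<beta>i_pos[of i] by (simp add: Kf_def \<beta>i_def)
    also have "\<dots> \<le> \<beta>i i * V (ai i) n" using n(2) \<beta>i_pos[of i] by (intro mult_left_mono) auto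
    also have "\<dots> \<le> V Y n" by (rule V_Y_lower[OF GB])
    finally show "n \<in> {n. c \<le> V Y n} \<inter> {1..ti i}" using ic n(1) by auto
  qed
  have "card {n\<in>{1..ti i}. Kf i (Pseq i) \<le> V (ai i) n} \<le> card ({n. c \<le> V Y n} \<inter> {1..ti i})"
    using sub by (intro card_mono) auto
  hence "(1 - 1 / real (i + 2)) * real (ti i) \<le> real (card ({n. c \<le> V Y n} \<inter> {1..ti i}))"
    using bp(4) by linarith
  moreover have "(1 - \<eta>) * real (ti i) \<le> (1 - 1 / real (i + 2)) * real (ti i)"
    using i\<eta> by (intro mult_right_mono) auto
  ultimately have "(1 - \<eta>) * real (ti i) \<le> real (card ({n. c \<le> V Y n} \<inter> {1..ti i}))" by linarith
  moreover have "ti i \<ge> N0" "ti i \<ge> 1" using bp(2) iN0 by auto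
  ultimately show "\<exists>N\<ge>N0. N \<ge> 1 \<and> (1 - \<eta>) * real N \<le> real (card ({n. c \<le> V Y n} \<inter> {1..N}))"
    by blast
qed

lemma term_small:
  assumes GB: GBprop and n: "\<Lambda> i \<le> n" "n \<le> Pseq (Suc i)"
  shows "\<beta>i j * V (ai j) n \<le> (1/2) ^ Suc i * (1/2) ^ Suc j"
proof (cases "j \<le> i")
  case True
  have pa: "prof (ai j) (Ui j)" using blk_prop[OF GB] by blast
  have "Ui j \<le> n" using Ui_le_\<Lambda>[OF True] n by simp
  hence "V (ai j) n = 0" by (rule V_zero[OF pa])
  thus ?thesis by simp
next
  case False
  have pa: "prof (ai j) (Ui j)" using blk_prop[OF GB] by blast
  have V1: "V (ai j) 0 = 1" using blk_prop[OF GB] by blast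
  have Vn: "0 \<le> V (ai j) n" by (rule V_nonneg[OF pa])
  have "V (ai j) n \<le> M ^ n" using V_pow[OF pa, of n] V1 by simp
  hence "\<beta>i j * V (ai j) n \<le> \<beta>i j * M ^ n" using \<beta>i_pos[of j] by (intro mult_left_mono) auto
  also have "\<dots> = (1/4) ^ Suc j * (M ^ n / M ^ Pseq j)" by (simp add: \<beta>i_def \<beta>f_def)
  also have "M ^ n / M ^ Pseq j \<le> 1"
  proof -
    have "n \<le> Pseq j" using n(2) Pseq_mono[of "Suc i" j] False by simp
    hence "M ^ n \<le> M ^ Pseq j" using M1 by (intro power_increasing) auto
    thus ?thesis using M1 by (simp add: divide_le_eq_1)
  qed
  hence "(1/4) ^ Suc j * (M ^ n / M ^ Pseq j) \<le> (1/4) ^ Suc j * 1" by (intro mult_left_mono) auto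
  also have "(1/4::real) ^ Suc j * 1 = (1/2) ^ Suc j * (1/2) ^ Suc j"
    by (simp add: power_mult_distrib[symmetric])
  also have "\<dots> \<le> (1/2) ^ Suc i * (1/2) ^ Suc j"
    using False by (intro mult_right_mono power_decreasing) auto
  finally show ?thesis .
qed

lemma Y_small:
  assumes GB: GBprop and \<delta>: "\<delta> > 0"
  shows "freq_dense {n. V Y n < \<delta>}"
  unfolding freq_dense_def
proof (intro allI impI)
  fix \<eta> :: real and N0 :: nat assume \<eta>: "\<eta> > 0"
  obtain i0 where i0: "(1/2::real) ^ i0 < \<delta>" using real_arch_pow_inv[OF \<delta>, of "1/2"] by auto
  define i where "i = max (max i0 N0) (nat \<lceil>1 / \<eta>\<rceil>)"
  have "1 / \<eta> \<le> real i" unfolding i_def by linarith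
  hence "1 / \<eta> \<le> real (i + 2)" by simp
  hence i\<eta>: "1 / real (i + 2) \<le> \<eta>" using \<eta> by (simp add: divide_le_eq field_simps)
  have "(1/2::real) ^ Suc i \<le> (1/2) ^ i0" unfolding i_def by (intro power_decreasing) auto
  hence hi: "(1/2::real) ^ Suc i < \<delta>" using i0 by simp
  define N where "N = Pseq (Suc i)"
  have N: "N = (i + 2) * (\<Lambda> i + 1)" unfolding N_def by (rule Pseq_Suc)
  have "(i + 2) * 1 \<le> (i + 2) * (\<Lambda> i + 1)" by (intro mult_le_mono2) simp
  hence iN: "i + 2 \<le> N" unfolding N by simp
  have "N0 \<le> i" unfolding i_def by simp
  hence NN0: "N0 \<le> N" using iN by simp
  have N1: "1 \<le> N" using iN by simp
  have small: "V Y n < \<delta>" if "\<Lambda> i \<le> n" "n \<le> N" for n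
  proof -
    have "V Y n \<le> (\<Sum>j. \<beta>i j * V (ai j) n)" using V_Y[OF GB] by blast
    also have "\<dots> \<le> (\<Sum>j. (1/2) ^ Suc i * (1/2) ^ Suc j)"
    proof (rule suminf_le)
      show "\<beta>i j * V (ai j) n \<le> (1/2) ^ Suc i * (1/2) ^ Suc j" for j
        using term_small[OF GB, of i n j] that unfolding N_def by auto
      show "summable (\<lambda>j. \<beta>i j * V (ai j) n)" using V_Y[OF GB] by blast
      show "summable (\<lambda>j. (1/2::real) ^ Suc i * (1/2) ^ Suc j)"
        using power_half_series by (intro summable_mult) (simp add: sums_summable)
    qed
    also have "\<dots> = (1/2) ^ Suc i * 1"
      using power_half_series by (subst suminf_mult) (auto simp: sums_summable sums_unique[symmetric])
    finally show ?thesis using hi by simp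
  qed
  have sub: "{Suc (\<Lambda> i)..N} \<subseteq> {n. V Y n < \<delta>} \<inter> {1..N}" using small by auto
  have "card {Suc (\<Lambda> i)..N} \<le> card ({n. V Y n < \<delta>} \<inter> {1..N})" using sub by (intro card_mono) auto
  moreover have "card {Suc (\<Lambda> i)..N} = N - \<Lambda> i" by simp
  ultimately have c: "real N - real (\<Lambda> i) \<le> real (card ({n. V Y n < \<delta>} \<inter> {1..N}))"
    by linarith
  have "\<Lambda> i * (i + 2) \<le> N" unfolding N by simp
  hence "real (\<Lambda> i) * real (i + 2) \<le> real N" by (metis of_nat_mono of_nat_mult)
  hence "real (\<Lambda> i) \<le> real N / real (i + 2)" by (simp add: le_divide_eq)
  also have "\<dots> = 1 / real (i + 2) * real N" by simp
  also have "\<dots> \<le> \<eta> * real N" using i\<eta> by (intro mult_right_mono) auto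
  finally have "(1 - \<eta>) * real N \<le> real (card ({n. V Y n < \<delta>} \<inter> {1..N}))" using c
    by (simp add: algebra_simps)
  thus "\<exists>N\<ge>N0. N \<ge> 1 \<and> (1 - \<eta>) * real N \<le> real (card ({n. V Y n < \<delta>} \<inter> {1..N}))"
    using NN0 N1 by blast
qed

lemma vec_series:
  assumes "\<And>j. 0 \<le> a j"
  shows "(\<lambda>m. norm ((bshift ^^ n) (vec a) m) powr p * v m) = (\<lambda>m. (if m = 0 then 0 else a (m + n)) * v m)"
proof -
  have "(bshift ^^ n) (vec a) = (\<lambda>m. if m = 0 then 0 else vec a (m + n))"
    by (rule bshift_pow) (simp add: vec_def)
  thus ?thesis using norm_vec_powr[OF assms] by (auto simp: vec_def fun_eq_iff)
qed

lemma yv_in_X: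
  assumes GB: GBprop
  shows "vec Y \<in> lpv_space p v"
proof -
  have "summable (\<lambda>m. (if m = 0 then 0 else Y (m + 0)) * v m)" using V_Y[OF GB, of 0] by blast
  hence "summable (\<lambda>m. norm ((bshift ^^ 0) (vec Y) m) powr p * v m)"
    using vec_series[of Y 0] Y_nonneg[OF GB] by simp
  thus ?thesis by (simp add: inX vec_def)
qed

lemma yv_Qf:
  assumes GB: GBprop
  shows "Qf ((bshift ^^ n) (vec Y)) = V Y n"
  by (rule Qf_vec) (rule Y_nonneg[OF GB])

lemma yv_nonzero:
  assumes GB: GBprop
  shows "\<exists>m. vec Y m \<noteq> 0"
proof -
  have "{n. 1 \<le> V Y n} \<noteq> {}"
  proof
    assume e: "{n. 1 \<le> V Y n} = {}"
    have h: "(1/2::real) > 0" by simp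
    from Y_big[OF GB, of 1, unfolded freq_dense_def, rule_format, OF h, of 0]
    obtain N where "N \<ge> 1" "(1 - 1/2) * real N \<le> real (card ({n. 1 \<le> V Y n} \<inter> {1..N}))"
      by blast
    with e show False by simp
  qed
  then obtain n where n: "1 \<le> V Y n" by auto
  show ?thesis
  proof (rule ccontr)
    assume "\<not> ?thesis"
    hence z: "vec Y m = 0" for m by simp
    have "Y m = 0" if "m \<ge> 1" for m
    proof -
      have "complex_of_real (Y m powr (1 / p)) = 0" using z[of m] that by (simp add: vec_def)
      hence "Y m powr (1/p) = 0" by simp
      thus ?thesis by simp
    qed
    hence "(\<lambda>m. (if m = 0 then 0 else Y (m + n)) * v m) = (\<lambda>m. 0)" by (auto simp: fun_eq_iff)
    hence "V Y n = 0" unfolding V_def by simp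
    with n show False by simp
  qed
qed

end

definition Dseq :: "nat \<Rightarrow> nat \<Rightarrow> complex" where
  "Dseq r = (\<lambda>m. if m = 0 then 0 else
      if m \<le> length (from_nat r :: (rat \<times> rat) list)
      then Complex (of_rat (fst ((from_nat r :: (rat \<times> rat) list) ! (m - 1))))
                   (of_rat (snd ((from_nat r :: (rat \<times> rat) list) ! (m - 1))))
      else 0)"

definition Lr :: "nat \<Rightarrow> nat" where "Lr r = length (from_nat r :: (rat \<times> rat) list)"

lemma Dseq_zero: "m = 0 \<or> m > Lr r \<Longrightarrow> Dseq r m = 0"
  by (auto simp: Dseq_def Lr_def)

lemma rat_approx_complex:
  fixes z :: complex and \<rho> :: real
  assumes "\<rho> > 0"
  shows "\<exists>a b. norm (z - Complex (of_rat a) (of_rat b)) < \<rho>"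
proof -
  obtain x where x: "x \<in> \<rat>" "Re z - \<rho>/2 < x" "x < Re z + \<rho>/2"
    using Rats_dense_in_real[of "Re z - \<rho>/2" "Re z + \<rho>/2"] assms by auto
  obtain y where y: "y \<in> \<rat>" "Im z - \<rho>/2 < y" "y < Im z + \<rho>/2"
    using Rats_dense_in_real[of "Im z - \<rho>/2" "Im z + \<rho>/2"] assms by auto
  obtain a where a: "x = of_rat a" using x(1) Rats_cases by blast
  obtain b where b: "y = of_rat b" using y(1) Rats_cases by blast
  have "norm (z - Complex x y) \<le> \<bar>Re (z - Complex x y)\<bar> + \<bar>Im (z - Complex x y)\<bar>" by (rule cmod_le)
  also have "\<dots> < \<rho>" using x y by (simp add: abs_less_iff)
  finally show ?thesis using a b by blast
qed

context wsh
begin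

lemma Dseq_in_X: "Dseq r \<in> lpv_space p v"
proof -
  have "summable (\<lambda>n. norm (Dseq r n) powr p * v n)"
    by (rule summable_finite[of "{1..Lr r}"]) (auto simp: Dseq_zero)
  thus ?thesis by (simp add: inX Dseq_def)
qed

lemma Dseq_dense:
  assumes x: "x \<in> lpv_space p v" and e: "e > 0"
  shows "\<exists>r. Qf (x - Dseq r) < e"
proof -
  have x0: "x 0 = 0" and sx: "summable (\<lambda>n. norm (x n) powr p * v n)" using x by (auto simp: inX)
  obtain N where N: "\<forall>n\<ge>N. norm (\<Sum>i. norm (x (i + n)) powr p * v (i + n)) < e / 2"
    using suminf_exist_split[OF _ sx, of "e/2"] e by auto
  define L where "L = max N 1"
  have L1: "L \<ge> 1" unfolding L_def by simp
  define \<rho> where "\<rho> m = (e / (4 * real L * v m)) powr (1 / p)" for m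
  have \<rho>pos: "\<rho> m > 0" if "m \<ge> 1" for m
    unfolding \<rho>_def using e vpos[OF that] L1 by simp
  have "\<forall>m. \<exists>ab. m \<ge> 1 \<longrightarrow> norm (x m - Complex (of_rat (fst ab)) (of_rat (snd ab))) < \<rho> m"
    using rat_approx_complex \<rho>pos by fastforce
  then obtain q where q: "\<And>m. m \<ge> 1 \<Longrightarrow> norm (x m - Complex (of_rat (fst (q m))) (of_rat (snd (q m)))) < \<rho> m"
    by metis
  define l where "l = map q [1..<L+1]"
  define r where "r = to_nat l"
  have fl: "(from_nat r :: (rat \<times> rat) list) = l" unfolding r_def by simp
  have Dr: "Dseq r m = (if m = 0 then 0 else if m \<le> L then Complex (of_rat (fst (q m))) (of_rat (snd (q m))) else 0)" for m
  proof -
    have ln: "length l = L" unfolding l_def by simp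
    have nth: "l ! (m - 1) = q m" if "1 \<le> m" "m \<le> L" for m
      unfolding l_def using that by (simp del: upt_Suc)
    show ?thesis unfolding Dseq_def fl using ln nth by auto
  qed
  have d: "x - Dseq r \<in> lpv_space p v" using X_diff[OF x Dseq_in_X] by blast
  define g where "g m = norm ((x - Dseq r) m) powr p * v m" for m
  have sg: "summable g" using d unfolding g_def inX by blast
  have eq: "Qf (x - Dseq r) = (\<Sum>m. g (m + (L + 1))) + (\<Sum>m<L + 1. g m)"
    unfolding Qf_def g_def[symmetric] by (rule suminf_split_initial_segment[OF sg])
  have "(\<Sum>m. g (m + (L + 1))) = (\<Sum>m. norm (x (m + (L + 1))) powr p * v (m + (L + 1)))"
    unfolding g_def by (simp add: Dr)
  also have "\<dots> < e / 2"
  proof -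
    have "L + 1 \<ge> N" unfolding L_def by simp
    hence "norm (\<Sum>m. norm (x (m + (L + 1))) powr p * v (m + (L + 1))) < e / 2" using N by blast
    thus ?thesis by simp
  qed
  finally have t1: "(\<Sum>m. g (m + (L + 1))) < e / 2" .
  have t2a: "(\<Sum>m<L + 1. g m) \<le> (\<Sum>m<L + 1. e / (4 * real L))"
  proof (rule sum_mono)
    fix m assume "m \<in> {..<L + 1}"
    hence mL: "m \<le> L" by simp
    show "g m \<le> e / (4 * real L)"
    proof (cases "m = 0")
      case True then show ?thesis using x0 e by (simp add: g_def Dr)
    next
      case False
      hence m1: "m \<ge> 1" by simp
      have vm: "v m > 0" using vpos m1 by simp
      have "norm ((x - Dseq r) m) = norm (x m - Complex (of_rat (fst (q m))) (of_rat (snd (q m))))"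
        using False mL by (simp add: Dr)
      hence lt: "norm ((x - Dseq r) m) < \<rho> m" using q[OF m1] by simp
      have "norm ((x - Dseq r) m) powr p \<le> \<rho> m powr p"
        using lt p0 by (intro powr_mono2) auto
      also have "\<rho> m powr p = e / (4 * real L * v m)"
        unfolding \<rho>_def using e vm L1 p0 by (simp add: powr_powr)
      finally have "g m \<le> e / (4 * real L * v m) * v m" unfolding g_def using vm by (intro mult_right_mono) auto
      also have "\<dots> = e / (4 * real L)" using vm by simp
      finally show ?thesis .
    qed
  qed
  have "(\<Sum>m<L + 1. e / (4 * real L)) = real (L + 1) * (e / (4 * real L))" by simp
  also have "\<dots> \<le> e / 2"
  proof -
    have "real (L + 1) \<le> 2 * real L" using L1 by simp
    hence "real (L + 1) * (e / (4 * real L)) \<le> 2 * real L * (e / (4 * real L))" using e by (intro mult_right_mono) auto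
    also have "\<dots> = e / 2" using L1 by simp
    finally show ?thesis .
  qed
  finally have t2b: "(\<Sum>m<L + 1. e / (4 * real L)) \<le> e / 2" .
  have t2: "(\<Sum>m<L + 1. g m) \<le> e / 2" using t2a t2b by linarith
  have "Qf (x - Dseq r) < e" using eq t1 t2 by linarith
  thus ?thesis by blast
qed

end

context wsh
begin

definition el :: "nat \<Rightarrow> real \<Rightarrow> nat \<Rightarrow> complex" where
  "el r l = (\<lambda>m. Dseq r m + complex_of_real l * vec Y m)"

definition Gam :: "(nat \<Rightarrow> complex) set" where
  "Gam = {el (fst (prod_decode q)) l | q l. (1/2) ^ Suc q < l \<and> l < (1/2) ^ q}"

lemma el_in_X:
  assumes GB: GBprop shows "el r l \<in> lpv_space p v"
proof -
  have "(\<lambda>n. complex_of_real l * vec Y n) \<in> lpv_space p v" using X_scale[OF yv_in_X[OF GB]] by blast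
  from X_add[OF Dseq_in_X this] show ?thesis unfolding el_def by simp
qed

lemma q_unique:
  fixes l :: real
  assumes "(1/2) ^ Suc q < l" "l < (1/2) ^ q" "(1/2) ^ Suc q' < l" "l < (1/2) ^ q'"
  shows "q = q'"
proof (rule ccontr)
  assume "q \<noteq> q'"
  hence "Suc q \<le> q' \<or> Suc q' \<le> q" by auto
  thus False
  proof
    assume "Suc q \<le> q'"
    hence "(1/2::real) ^ q' \<le> (1/2) ^ Suc q" by (intro power_decreasing) auto
    with assms show False by simp
  next
    assume "Suc q' \<le> q"
    hence "(1/2::real) ^ q \<le> (1/2) ^ Suc q'" by (intro power_decreasing) auto
    with assms show False by simp
  qed
qed

lemma el_diff_Qf:
  assumes GB: GBprop and j: "max (Lr r) (Lr r') \<le> j"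
  shows "Qf ((bshift ^^ j) (el r l) - (bshift ^^ j) (el r' l')) = \<bar>l - l'\<bar> powr p * V Y j"
proof -
  have Y0: "vec Y 0 = 0" by (simp add: vec_def)
  have z0: "(el r l - el r' l') 0 = 0" by (simp add: el_def Dseq_zero Y0)
  have "(bshift ^^ j) (el r l) - (bshift ^^ j) (el r' l') = (bshift ^^ j) (el r l - el r' l')"
    by (simp add: bshift_pow_diff)
  also have "\<dots> = (\<lambda>m. if m = 0 then 0 else (el r l - el r' l') (m + j))" by (rule bshift_pow[of "el r l - el r' l'" j, OF z0])
  also have "\<dots> = (\<lambda>m. complex_of_real (l - l') * (bshift ^^ j) (vec Y) m)"
  proof (rule ext)
    fix m
    show "(if m = 0 then 0 else (el r l - el r' l') (m + j)) = complex_of_real (l - l') * (bshift ^^ j) (vec Y) m"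
    proof (cases "m = 0")
      case True then show ?thesis using bshift_pow[of "vec Y" j] Y0 by simp
    next
      case False
      have "Dseq r (m + j) = 0" "Dseq r' (m + j) = 0" using j False by (auto intro!: Dseq_zero)
      then show ?thesis using False bshift_pow[of "vec Y" j] Y0 by (simp add: el_def algebra_simps)
    qed
  qed
  finally have eq: "(bshift ^^ j) (el r l) - (bshift ^^ j) (el r' l') = (\<lambda>m. complex_of_real (l - l') * (bshift ^^ j) (vec Y) m)" .
  have zX: "(bshift ^^ j) (vec Y) \<in> lpv_space p v" using Bn_in_X[OF yv_in_X[OF GB]] by blast
  have n: "cmod (complex_of_real (l - l')) = \<bar>l - l'\<bar>" by (rule norm_of_real)
  show ?thesis unfolding eq using X_scale[OF zX, of "complex_of_real (l - l')"] yv_Qf[OF GB, of j] n by simp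
qed

lemma GB_ddc:
  assumes GB: GBprop
  shows "dense_distr_chaotic_B p v"
  unfolding dense_distr_chaotic_B_def dc_set_def
proof (rule exI[of _ Gam], intro conjI)
  show sub: "Gam \<subseteq> lpv_space p v" unfolding Gam_def using el_in_X[OF GB] by blast
  show "uncountable Gam"
  proof
    assume cG: "countable Gam"
    obtain m0 where m0: "vec Y m0 \<noteq> 0" using yv_nonzero[OF GB] by blast
    define r0 where "r0 = fst (prod_decode 0)"
    have "el r0 ` {1/2<..<1} \<subseteq> Gam" unfolding Gam_def r0_def by force
    hence "countable (el r0 ` {1/2<..<1})" using cG countable_subset by blast
    moreover have "inj_on (el r0) {1/2<..<1}"
    proof (rule inj_onI)
      fix a b assume "el r0 a = el r0 b"
      hence "el r0 a m0 = el r0 b m0" by simp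
      hence "complex_of_real a * vec Y m0 = complex_of_real b * vec Y m0" by (simp add: el_def)
      thus "a = b" using m0 by simp
    qed
    ultimately have "countable {1/2<..<(1::real)}" by (rule countable_image_inj_on)
    thus False using uncountable_open_interval[of "1/2" "1::real"] by simp
  qed
  show "\<exists>\<epsilon>>0. \<forall>\<delta>>0. \<forall>x\<in>Gam. \<forall>y\<in>Gam. x \<noteq> y \<longrightarrow>
        lower_dens {j. lpv_dist p v ((bshift ^^ j) x) ((bshift ^^ j) y) < \<epsilon>} = 0 \<and>
        upper_dens {j. lpv_dist p v ((bshift ^^ j) x) ((bshift ^^ j) y) < \<delta>} = 1"
  proof (rule exI[of _ 1], intro conjI)
    show "(0::real) < 1" by simp
    show "\<forall>\<delta>>0. \<forall>x\<in>Gam. \<forall>y\<in>Gam. x \<noteq> y \<longrightarrow>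
        lower_dens {j. lpv_dist p v ((bshift ^^ j) x) ((bshift ^^ j) y) < 1} = 0 \<and>
        upper_dens {j. lpv_dist p v ((bshift ^^ j) x) ((bshift ^^ j) y) < \<delta>} = 1"
    proof (intro allI impI ballI)
    fix \<delta> :: real and x y assume \<delta>: "\<delta> > 0" and x: "x \<in> Gam" and y: "y \<in> Gam" and xy: "x \<noteq> y"
    obtain q l where q: "x = el (fst (prod_decode q)) l" "(1/2) ^ Suc q < l" "l < (1/2) ^ q"
      using x unfolding Gam_def by blast
    obtain q' l' where q': "y = el (fst (prod_decode q')) l'" "(1/2) ^ Suc q' < l'" "l' < (1/2) ^ q'"
      using y unfolding Gam_def by blast
    have ll: "l \<noteq> l'"
    proof
      assume "l = l'"
      hence "q = q'" using q_unique[of q l q'] q q' by simp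
      with \<open>l = l'\<close> q q' xy show False by simp
    qed
    define c where "c = \<bar>l - l'\<bar> powr p"
    have c: "c > 0" unfolding c_def using ll by simp
    define L0 where "L0 = max (Lr (fst (prod_decode q))) (Lr (fst (prod_decode q')))"
    have xX: "(bshift ^^ j) x \<in> lpv_space p v" and yX: "(bshift ^^ j) y \<in> lpv_space p v" for j
      using Bn_in_X sub x y by blast+
    have key: "lpv_dist p v ((bshift ^^ j) x) ((bshift ^^ j) y) < t \<longleftrightarrow> c * V Y j < t powr p"
      if "L0 \<le> j" "t > 0" for j t
      using dist_less_iff[OF xX yX that(2)] el_diff_Qf[OF GB, of _ _ j l l'] that(1)
      unfolding q(1) q'(1) L0_def c_def by simp
    have Bb: "freq_dense {n. 1 / c \<le> V Y n}" by (rule Y_big[OF GB])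
    have "freq_sparse {j. lpv_dist p v ((bshift ^^ j) x) ((bshift ^^ j) y) < 1}"
    proof (rule freq_dense_compl_sparse[OF Bb, of L0])
      fix j assume j: "L0 \<le> j" "j \<in> {j. lpv_dist p v ((bshift ^^ j) x) ((bshift ^^ j) y) < 1}"
      hence "c * V Y j < 1" using key[of j 1] by simp
      hence "V Y j < 1 / c" using c by (simp add: less_divide_eq mult.commute)
      thus "j \<notin> {n. 1 / c \<le> V Y n}" by simp
    qed
    hence low: "lower_dens {j. lpv_dist p v ((bshift ^^ j) x) ((bshift ^^ j) y) < 1} = 0"
      by (rule freq_sparse_lower)
    have Bd: "freq_dense {n. V Y n < \<delta> powr p / c}" by (rule Y_small[OF GB]) (use \<delta> c in simp)
    have "freq_dense {j. lpv_dist p v ((bshift ^^ j) x) ((bshift ^^ j) y) < \<delta>}"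
    proof (rule freq_dense_mono[OF Bd, of L0])
      fix j assume j: "L0 \<le> j" "j \<in> {n. V Y n < \<delta> powr p / c}"
      hence "c * V Y j < \<delta> powr p" using c by (simp add: less_divide_eq mult.commute)
      thus "j \<in> {j. lpv_dist p v ((bshift ^^ j) x) ((bshift ^^ j) y) < \<delta>}" using key[OF j(1) \<delta>] by simp
    qed
    hence up: "upper_dens {j. lpv_dist p v ((bshift ^^ j) x) ((bshift ^^ j) y) < \<delta>} = 1"
      by (rule freq_dense_upper)
    show "lower_dens {j. lpv_dist p v ((bshift ^^ j) x) ((bshift ^^ j) y) < 1} = 0 \<and>
        upper_dens {j. lpv_dist p v ((bshift ^^ j) x) ((bshift ^^ j) y) < \<delta>} = 1"
      using low up by blast
    qed
  qed
  show "\<forall>x\<in>lpv_space p v. \<forall>e>0. \<exists>y\<in>Gam. lpv_dist p v x y < e"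
  proof (intro ballI allI impI)
    fix x :: "nat \<Rightarrow> complex" and e :: real
    assume x: "x \<in> lpv_space p v" and e: "e > 0"
    define e' where "e' = e powr p"
    have e': "e' > 0" unfolding e'_def using e by simp
    have tp: "2 powr p > 0" by simp
    obtain r where r: "Qf (x - Dseq r) < e' / (2 * 2 powr p)"
      using Dseq_dense[OF x, of "e' / (2 * 2 powr p)"] e' by auto
    define K where "K = Qf (vec Y)"
    have K0: "K \<ge> 0" unfolding K_def by (rule Qf_nonneg[OF yv_in_X[OF GB]])
    define \<rho> where "\<rho> = (e' / (2 * 2 powr p * (K + 1))) powr (1 / p)"
    have \<rho>: "\<rho> > 0" unfolding \<rho>_def using e' K0 by simp
    obtain l where l: "(1/2::real) ^ l < \<rho>" using real_arch_pow_inv[OF \<rho>, of "1/2"] by auto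
    define q where "q = prod_encode (r, l)"
    have rq: "fst (prod_decode q) = r" unfolding q_def by simp
    have lq: "l \<le> q" unfolding q_def by (rule le_prod_encode_2)
    define lam :: real where "lam = 3/4 * (1/2) ^ q"
    have lam1: "(1/2) ^ Suc q < lam" "lam < (1/2) ^ q" unfolding lam_def by auto
    have lam0: "lam > 0" unfolding lam_def by simp
    have "lam \<le> (1/2) ^ q" using lam1 by simp
    also have "\<dots> \<le> (1/2) ^ l" using lq by (intro power_decreasing) auto
    finally have lam\<rho>: "lam < \<rho>" using l by simp
    have gG: "el r lam \<in> Gam" unfolding Gam_def using lam1 rq by force
    have xd: "x - Dseq r \<in> lpv_space p v" using X_diff[OF x Dseq_in_X] by blast
    have yl: "(\<lambda>n. complex_of_real lam * vec Y n) \<in> lpv_space p v"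
      and Qyl: "Qf (\<lambda>n. complex_of_real lam * vec Y n) = lam powr p * K"
      using X_scale[OF yv_in_X[OF GB], of "complex_of_real lam"] lam0 unfolding K_def by auto
    have "lam powr p < \<rho> powr p" using lam\<rho> lam0 p0 by (intro powr_less_mono2) auto
    also have "\<rho> powr p = e' / (2 * 2 powr p * (K + 1))" unfolding \<rho>_def using e' K0 p0 by (simp add: powr_powr)
    finally have lp: "lam powr p < e' / (2 * 2 powr p * (K + 1))" .
    have "lam powr p * K \<le> e' / (2 * 2 powr p * (K + 1)) * K" using lp K0 by (intro mult_right_mono) auto
    also have "\<dots> \<le> e' / (2 * 2 powr p * (K + 1)) * (K + 1)" using e' K0 by (intro mult_left_mono) auto
    also have "\<dots> = e' / (2 * 2 powr p)" using K0 by simp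
    finally have ylb: "Qf (\<lambda>n. complex_of_real lam * vec Y n) \<le> e' / (2 * 2 powr p)" using Qyl by simp
    have eqd: "x - el r lam = (x - Dseq r) - (\<lambda>n. complex_of_real lam * vec Y n)"
      by (simp add: el_def fun_eq_iff)
    have "Qf (x - el r lam) \<le> 2 powr p * (Qf (x - Dseq r) + Qf (\<lambda>n. complex_of_real lam * vec Y n))"
      unfolding eqd using X_diff[OF xd yl] by blast
    also have "\<dots> < 2 powr p * (e' / (2 * 2 powr p) + e' / (2 * 2 powr p))"
      using r ylb tp by (intro mult_strict_left_mono) auto
    also have "\<dots> = e'" using tp by (simp add: field_simps)
    finally have "Qf (x - el r lam) < e powr p" unfolding e'_def .
    hence "lpv_dist p v x (el r lam) < e" using dist_less_iff[OF x el_in_X[OF GB] e] by simp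
    thus "\<exists>y\<in>Gam. lpv_dist p v x y < e" using gG by blast
  qed
qed

end

context wsh
begin

lemma AC_step:
  assumes z: "z \<in> lpv_space p v" and \<epsilon>0: "\<epsilon>0 > 0"
    and H1: "lower_dens {j. Qf ((bshift ^^ j) z) < \<epsilon>0} = 0"
    and H2: "\<And>\<theta>. \<theta> > 0 \<Longrightarrow> upper_dens {j. Qf ((bshift ^^ j) z) < \<theta>} = 1"
    and k: "k \<ge> 1"
  shows "\<exists>N' S C. N' > b \<and> finite S \<and> S \<noteq> {} \<and> S \<subseteq> {1..} \<and> (\<forall>j\<in>S. C j \<noteq> (0::complex)) \<and>
      real (card {n\<in>{1..N'}. (\<Sum>j\<in>S. norm (C j) * vext v (int j - int n)) /
              (\<Sum>j\<in>S. norm (C j) * v j) \<ge> real k}) \<ge> real N' * (1/2)"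
proof -
  define F where "F j = Qf ((bshift ^^ j) z)" for j
  define \<theta> where "\<theta> = \<epsilon>0 / (4 * k)"
  have \<theta>: "\<theta> > 0" unfolding \<theta>_def using \<epsilon>0 k by simp
  have "{j. F j < \<theta>} \<noteq> {}" using upper_one_nonempty[OF H2[OF \<theta>]] unfolding F_def .
  then obtain m where m: "F m < \<theta>" by auto
  obtain N where N: "N \<ge> max (4 * m + 4) (b + m + 1)" "N \<ge> 1"
      "real (card ({j. F j < \<epsilon>0} \<inter> {1..N})) \<le> 1/4 * real N"
    using lower_zero_sparse[OF H1[folded F_def], of "1/4" "max (4 * m + 4) (b + m + 1)"] by auto
  define N' where "N' = N - m"
  have N'b: "N' > b" and N'1: "N' \<ge> 1" unfolding N'_def using N by auto
  define G where "G = {n\<in>{1..N'}. \<epsilon>0 \<le> F (m + n)}"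
  have "{1..N'} - G \<subseteq> (\<lambda>j. j - m) ` ({j. F j < \<epsilon>0} \<inter> {1..N})"
  proof
    fix n assume "n \<in> {1..N'} - G"
    hence n: "1 \<le> n" "n \<le> N'" "F (m + n) < \<epsilon>0" unfolding G_def by auto
    show "n \<in> (\<lambda>j. j - m) ` ({j. F j < \<epsilon>0} \<inter> {1..N})"
      by (rule image_eqI[of _ _ "m + n"]) (use n N'_def in auto)
  qed
  hence "card ({1..N'} - G) \<le> card ((\<lambda>j. j - m) ` ({j. F j < \<epsilon>0} \<inter> {1..N}))"
    by (intro card_mono) auto
  also have "\<dots> \<le> card ({j. F j < \<epsilon>0} \<inter> {1..N})" by (rule card_image_le) auto
  finally have cb: "real (card ({1..N'} - G)) \<le> 1/4 * real N" using N(3) by linarith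
  have GN: "G \<subseteq> {1..N'}" unfolding G_def by auto
  have "card ({1..N'} - G) = N' - card G" using GN finite_subset[OF GN] by (subst card_Diff_subset) auto
  moreover have "card G \<le> N'" using card_mono[OF _ GN] by simp
  ultimately have "real (card ({1..N'} - G)) = real N' - real (card G)" by simp
  hence cG: "real (card G) \<ge> real N' - 1/4 * real N" using cb by linarith
  have "real N = real N' + real m" unfolding N'_def using N by simp
  moreover have "4 * real m \<le> real N" using N by simp
  ultimately have cardG: "real (card G) \<ge> real N' * (1/2)" using cG by linarith
  hence Gne: "G \<noteq> {}" using N'1 by auto
  define w where "w = (bshift ^^ m) z"
  have wX: "w \<in> lpv_space p v" unfolding w_def using Bn_in_X[OF z] by blast
  have w0: "w 0 = 0" using wX by (simp add: inX)
  define h where "h n i = norm ((bshift ^^ n) w i) powr p * v i" for n i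
  have hF: "F (m + n) = (\<Sum>i. h n i)" for n
  proof -
    have e: "(bshift ^^ (m + n)) z = (bshift ^^ n) ((bshift ^^ m) z)"
      by (simp only: add.commute[of m n] funpow_add comp_def)
    show ?thesis unfolding F_def h_def Qf_def w_def e ..
  qed
  have sh: "summable (h n)" for n
    using Bn_in_X[OF wX, of n] unfolding h_def inX by blast
  have ev: "eventually (\<lambda>T. \<forall>n\<in>G. \<epsilon>0 / 2 < (\<Sum>i<T. h n i)) sequentially"
  proof (rule eventually_ball_finite)
    show "finite G" unfolding G_def by auto
    show "\<forall>n\<in>G. eventually (\<lambda>T. \<epsilon>0 / 2 < (\<Sum>i<T. h n i)) sequentially"
    proof
      fix n assume "n \<in> G"
      hence "\<epsilon>0 / 2 < (\<Sum>i. h n i)" using hF[of n] \<epsilon>0 unfolding G_def by auto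
      thus "eventually (\<lambda>T. \<epsilon>0 / 2 < (\<Sum>i<T. h n i)) sequentially"
        using order_tendstoD(1)[OF summable_LIMSEQ[OF sh]] by blast
    qed
  qed
  then obtain T where T: "\<And>n. n \<in> G \<Longrightarrow> \<epsilon>0 / 2 < (\<Sum>i<T. h n i)"
    unfolding eventually_sequentially by blast
  define Lt where "Lt = T + N'"
  define S where "S = {j\<in>{1..Lt}. w j \<noteq> 0}"
  define C where "C j = complex_of_real (norm (w j) powr p)" for j
  define a where "a j = (if j \<in> {1..Lt} then norm (w j) powr p else 0)" for j
  have nC: "norm (C j) = norm (w j) powr p" for j unfolding C_def by simp
  have Ssum: "(\<Sum>j\<in>S. norm (C j) * f j) = (\<Sum>j\<in>{1..Lt}. a j * f j)" for f
  proof -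
    have "(\<Sum>j\<in>S. norm (C j) * f j) = (\<Sum>j\<in>S. a j * f j)"
      by (intro sum.cong) (auto simp: nC a_def S_def)
    also have "\<dots> = (\<Sum>j\<in>{1..Lt}. a j * f j)"
      by (intro sum.mono_neutral_left) (auto simp: S_def a_def)
    finally show ?thesis .
  qed
  have num: "\<epsilon>0 / 2 < (\<Sum>j\<in>S. norm (C j) * vext v (int j - int n))" if nG: "n \<in> G" for n
  proof -
    have nN: "n \<le> N'" using nG unfolding G_def by auto
    have "(\<Sum>j\<in>S. norm (C j) * vext v (int j - int n)) = (\<Sum>j\<in>{1..n + (Lt - n)}. a j * vext v (int j - int n))"
      using Ssum nN unfolding Lt_def by simp
    also have "\<dots> = (\<Sum>i\<in>{1..Lt - n}. a (i + n) * v i)" by (rule sum_vext)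
    also have "\<dots> = (\<Sum>i\<in>{1..Lt - n}. h n i)"
    proof (intro sum.cong refl)
      fix i assume "i \<in> {1..Lt - n}"
      hence i: "1 \<le> i" "i + n \<le> Lt" by auto
      show "a (i + n) * v i = h n i" unfolding h_def a_def using i bshift_pow[of w n, OF w0] by simp
    qed
    also have "(\<Sum>i<T. h n i) = (\<Sum>i\<in>{1..<T}. h n i)"
    proof -
      have "(\<Sum>i<T. h n i) = (\<Sum>i\<in>{0..<T}. h n i)" by (simp add: atLeast0LessThan)
      also have "\<dots> = (\<Sum>i\<in>{1..<T}. h n i)"
        using bshift_pow[of w n, OF w0] by (intro sum.mono_neutral_right) (auto simp: h_def)
      finally show ?thesis .
    qed
    hence "(\<Sum>i<T. h n i) \<le> (\<Sum>i\<in>{1..Lt - n}. h n i)"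
    proof -
      have "{1..<T} \<subseteq> {1..Lt - n}" using nN unfolding Lt_def by auto
      moreover have "0 \<le> h n i" for i unfolding h_def using bshift_pow[of w n, OF w0] vpos[of i]
        by (cases "i = 0") auto
      ultimately have "(\<Sum>i\<in>{1..<T}. h n i) \<le> (\<Sum>i\<in>{1..Lt - n}. h n i)"
        by (intro sum_mono2) auto
      thus ?thesis using \<open>(\<Sum>i<T. h n i) = (\<Sum>i\<in>{1..<T}. h n i)\<close> by simp
    qed
    hence "\<epsilon>0 / 2 < (\<Sum>i\<in>{1..Lt - n}. h n i)" using T[OF nG] by linarith
    thus ?thesis using calculation by simp
  qed
  have Sne: "S \<noteq> {}"
  proof
    assume "S = {}"
    from Gne obtain n where "n \<in> G" by auto
    from num[OF this] \<open>S = {}\<close> \<epsilon>0 show False by simp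
  qed
  have CS: "\<forall>j\<in>S. C j \<noteq> 0" unfolding S_def C_def using p0 by auto
  have den_pos: "0 < (\<Sum>j\<in>S. norm (C j) * v j)"
  proof (rule sum_pos)
    show "finite S" unfolding S_def by auto
    show "S \<noteq> {}" by (rule Sne)
    fix j assume "j \<in> S"
    hence "w j \<noteq> 0" "j \<ge> 1" unfolding S_def by auto
    thus "0 < norm (C j) * v j" using vpos[of j] nC[of j] by simp
  qed
  have den_le: "(\<Sum>j\<in>S. norm (C j) * v j) < \<theta>"
  proof -
    have "(\<Sum>j\<in>S. norm (C j) * v j) = (\<Sum>j\<in>{1..Lt}. norm (w j) powr p * v j)"
      unfolding Ssum by (intro sum.cong) (auto simp: a_def)
    also have "\<dots> \<le> (\<Sum>j. norm (w j) powr p * v j)"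
      using wX term_nonneg[of w, OF w0] by (intro sum_le_suminf) (auto simp: inX)
    also have "\<dots> = F m" unfolding F_def Qf_def w_def ..
    finally show ?thesis using m by simp
  qed
  have "G \<subseteq> {n\<in>{1..N'}. (\<Sum>j\<in>S. norm (C j) * vext v (int j - int n)) /
              (\<Sum>j\<in>S. norm (C j) * v j) \<ge> real k}"
  proof
    fix n assume nG: "n \<in> G"
    have "real k = (\<epsilon>0 / 2) / (2 * \<theta>)" unfolding \<theta>_def using k \<epsilon>0 by (simp add: field_simps)
    also have "\<dots> \<le> (\<epsilon>0 / 2) / (\<Sum>j\<in>S. norm (C j) * v j)"
      using den_pos den_le \<epsilon>0 \<theta> by (intro divide_left_mono) auto
    also have "\<dots> \<le> (\<Sum>j\<in>S. norm (C j) * vext v (int j - int n)) / (\<Sum>j\<in>S. norm (C j) * v j)"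
      using num[OF nG] den_pos by (intro divide_right_mono) auto
    finally show "n \<in> {n\<in>{1..N'}. (\<Sum>j\<in>S. norm (C j) * vext v (int j - int n)) /
              (\<Sum>j\<in>S. norm (C j) * v j) \<ge> real k}" using nG unfolding G_def by auto
  qed
  hence "card G \<le> card {n\<in>{1..N'}. (\<Sum>j\<in>S. norm (C j) * vext v (int j - int n)) /
              (\<Sum>j\<in>S. norm (C j) * v j) \<ge> real k}" by (intro card_mono) auto
  hence "real N' * (1/2) \<le> real (card {n\<in>{1..N'}. (\<Sum>j\<in>S. norm (C j) * vext v (int j - int n)) /
              (\<Sum>j\<in>S. norm (C j) * v j) \<ge> real k})" using cardG by linarith
  moreover have "finite S" "S \<subseteq> {1..}" unfolding S_def by auto
  ultimately show ?thesis using N'b Sne CS by blast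
qed

end

context wsh
begin

lemma AC:
  assumes "distr_chaotic_B p v"
  shows "\<exists>\<epsilon>::real. \<exists>N :: nat \<Rightarrow> nat. \<exists>S :: nat \<Rightarrow> nat set. \<exists>C :: nat \<Rightarrow> nat \<Rightarrow> complex.
         \<epsilon> > 0 \<and> strict_mono_on {1..} N \<and> (\<forall>k\<ge>1. N k \<ge> 1) \<and>
         (\<forall>k\<ge>1. finite (S k) \<and> S k \<noteq> {} \<and> S k \<subseteq> {1..} \<and> (\<forall>j\<in>S k. C k j \<noteq> 0)) \<and>
         (\<forall>k\<ge>1. real (card {n\<in>{1..N k}.
              (\<Sum>j\<in>S k. norm (C k j) * vext v (int j - int n)) /
              (\<Sum>j\<in>S k. norm (C k j) * v j) \<ge> real k}) \<ge> real (N k) * \<epsilon>)"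
proof -
  obtain \<Gamma> where dc: "dc_set bshift (lpv_space p v) (lpv_dist p v) \<Gamma>"
    using assms unfolding distr_chaotic_B_def by (elim exE)
  have GG: "\<Gamma> \<subseteq> lpv_space p v \<and> uncountable \<Gamma> \<and> (\<exists>\<epsilon>>0. \<forall>\<delta>>0. \<forall>x\<in>\<Gamma>. \<forall>y\<in>\<Gamma>. x \<noteq> y \<longrightarrow>
        lower_dens {j. lpv_dist p v ((bshift ^^ j) x) ((bshift ^^ j) y) < \<epsilon>} = 0 \<and>
        upper_dens {j. lpv_dist p v ((bshift ^^ j) x) ((bshift ^^ j) y) < \<delta>} = 1)"
    using dc unfolding dc_set_def .
  have G: "\<Gamma> \<subseteq> lpv_space p v" "uncountable \<Gamma>" using GG by (rule conjunct1, metis GG)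
  have e0: "\<exists>\<epsilon>>0. \<forall>\<delta>>0. \<forall>x\<in>\<Gamma>. \<forall>y\<in>\<Gamma>. x \<noteq> y \<longrightarrow>
        lower_dens {j. lpv_dist p v ((bshift ^^ j) x) ((bshift ^^ j) y) < \<epsilon>} = 0 \<and>
        upper_dens {j. lpv_dist p v ((bshift ^^ j) x) ((bshift ^^ j) y) < \<delta>} = 1"
    using GG by (elim conjE)
  obtain \<epsilon>0 where \<epsilon>0: "\<epsilon>0 > 0" and P0: "\<forall>\<delta>>0. \<forall>x\<in>\<Gamma>. \<forall>y\<in>\<Gamma>. x \<noteq> y \<longrightarrow>
        lower_dens {j. lpv_dist p v ((bshift ^^ j) x) ((bshift ^^ j) y) < \<epsilon>0} = 0 \<and>
        upper_dens {j. lpv_dist p v ((bshift ^^ j) x) ((bshift ^^ j) y) < \<delta>} = 1"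
    using e0 by (elim exE conjE)
  have "\<Gamma> \<noteq> {}"
  proof
    assume "\<Gamma> = {}"
    hence "countable \<Gamma>" by simp
    with G(2) show False by simp
  qed
  then obtain x where x: "x \<in> \<Gamma>" by auto
  have "\<Gamma> - {x} \<noteq> {}"
  proof
    assume "\<Gamma> - {x} = {}"
    hence "\<Gamma> \<subseteq> {x}" by auto
    moreover have "countable {x}" by simp
    ultimately have "countable \<Gamma>" by (rule countable_subset)
    with G(2) show False by simp
  qed
  then obtain y where y: "y \<in> \<Gamma>" "x \<noteq> y" by auto
  have xX: "x \<in> lpv_space p v" and yX: "y \<in> lpv_space p v" using G x y by auto
  define z where "z = x - y"
  have zX: "z \<in> lpv_space p v" unfolding z_def using X_diff[OF xX yX] by blast
  have dist_eq: "lpv_dist p v ((bshift ^^ j) x) ((bshift ^^ j) y) < t \<longleftrightarrow> Qf ((bshift ^^ j) z) < t powr p"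
    if "t > 0" for j t
  proof -
    have "(bshift ^^ j) x \<in> lpv_space p v" "(bshift ^^ j) y \<in> lpv_space p v"
      using Bn_in_X xX yX by blast+
    from dist_less_iff[OF this that] show ?thesis unfolding z_def by (simp add: bshift_pow_diff)
  qed
  have H1: "lower_dens {j. Qf ((bshift ^^ j) z) < \<epsilon>0 powr p} = 0"
  proof -
    have "{j. Qf ((bshift ^^ j) z) < \<epsilon>0 powr p} = {j. lpv_dist p v ((bshift ^^ j) x) ((bshift ^^ j) y) < \<epsilon>0}"
      using dist_eq[OF \<epsilon>0] by auto
    moreover have "lower_dens {j. lpv_dist p v ((bshift ^^ j) x) ((bshift ^^ j) y) < \<epsilon>0} = 0"
      using P0[rule_format, of 1 x y] x y by simp
    ultimately show ?thesis by simp
  qed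
  have H2: "upper_dens {j. Qf ((bshift ^^ j) z) < \<theta>} = 1" if \<theta>: "\<theta> > 0" for \<theta>
  proof -
    define \<delta> where "\<delta> = \<theta> powr (1 / p)"
    have \<delta>: "\<delta> > 0" unfolding \<delta>_def using \<theta> by simp
    have \<delta>p: "\<delta> powr p = \<theta>" unfolding \<delta>_def using \<theta> p0 by (simp add: powr_powr)
    have "{j. Qf ((bshift ^^ j) z) < \<theta>} = {j. lpv_dist p v ((bshift ^^ j) x) ((bshift ^^ j) y) < \<delta>}"
      using dist_eq[OF \<delta>] \<delta>p by auto
    moreover have "upper_dens {j. lpv_dist p v ((bshift ^^ j) x) ((bshift ^^ j) y) < \<delta>} = 1"
      using P0[rule_format, of \<delta> x y] x y \<delta> by simp
    ultimately show ?thesis by simp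
  qed
  have e0p: "\<epsilon>0 powr p > 0" using \<epsilon>0 by simp
  define P where "P k b t \<longleftrightarrow> fst t > b \<and> finite (fst (snd t)) \<and> fst (snd t) \<noteq> {} \<and> fst (snd t) \<subseteq> {1..} \<and>
      (\<forall>j\<in>fst (snd t). snd (snd t) j \<noteq> (0::complex)) \<and>
      real (card {n\<in>{1..fst t}. (\<Sum>j\<in>fst (snd t). norm (snd (snd t) j) * vext v (int j - int n)) /
              (\<Sum>j\<in>fst (snd t). norm (snd (snd t) j) * v j) \<ge> real k}) \<ge> real (fst t) * (1/2)"
    for k b :: nat and t :: "nat \<times> nat set \<times> (nat \<Rightarrow> complex)"
  have exP: "\<exists>t. P k b t" if k1: "k \<ge> 1" for k b
  proof -
    obtain N' S C where "N' > b \<and> finite S \<and> S \<noteq> {} \<and> S \<subseteq> {1..} \<and> (\<forall>j\<in>S. C j \<noteq> (0::complex)) \<and>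
      real (card {n\<in>{1..N'}. (\<Sum>j\<in>S. norm (C j) * vext v (int j - int n)) /
              (\<Sum>j\<in>S. norm (C j) * v j) \<ge> real k}) \<ge> real N' * (1/2)"
      using AC_step[OF zX e0p H1 H2 k1, of b] by blast
    thus ?thesis unfolding P_def by (intro exI[of _ "(N', S, C)"]) simp
  qed
  define pick where "pick k b = (SOME t. P k b t)" for k b
  have pickP: "P k b (pick k b)" if "k \<ge> 1" for k b
    unfolding pick_def using someI_ex[OF exP[OF that]] .
  define Ns where "Ns = rec_nat 0 (\<lambda>k Nk. fst (pick (Suc k) Nk))"
  have Ns0: "Ns 0 = 0" and NsS: "Ns (Suc k) = fst (pick (Suc k) (Ns k))" for k
    unfolding Ns_def by simp_all
  define S where "S k = fst (snd (pick k (Ns (k - 1))))" for k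
  define C where "C k = snd (snd (pick k (Ns (k - 1))))" for k
  have Pk: "P k (Ns (k - 1)) (Ns k, S k, C k)" if k1: "k \<ge> 1" for k
  proof -
    obtain k' where k': "k = Suc k'" using k1 by (cases k) auto
    have "P k (Ns (k - 1)) (pick k (Ns (k - 1)))" by (rule pickP[OF k1])
    moreover have "pick k (Ns (k - 1)) = (Ns k, S k, C k)"
      unfolding S_def C_def k' NsS by simp
    ultimately show ?thesis by simp
  qed
  have inc: "Ns k < Ns (Suc k)" for k using Pk[of "Suc k"] unfolding P_def fst_conv by simp
  have sm: "strict_mono_on {1..} Ns"
    by (rule strict_mono_onI) (use lift_Suc_mono_less[of Ns, OF inc] in blast)
  have N1: "\<forall>k\<ge>1. Ns k \<ge> 1"
  proof (intro allI impI)
    fix k :: nat assume "k \<ge> 1"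
    thus "Ns k \<ge> 1" using Pk[of k] unfolding P_def fst_conv by linarith
  qed
  have Pk': "Ns k > Ns (k - 1) \<and> finite (S k) \<and> S k \<noteq> {} \<and> S k \<subseteq> {1..} \<and> (\<forall>j\<in>S k. C k j \<noteq> (0::complex)) \<and>
      real (card {n\<in>{1..Ns k}. (\<Sum>j\<in>S k. norm (C k j) * vext v (int j - int n)) /
              (\<Sum>j\<in>S k. norm (C k j) * v j) \<ge> real k}) \<ge> real (Ns k) * (1/2)" if "k \<ge> 1" for k
    using Pk[OF that] unfolding P_def fst_conv snd_conv .
  show ?thesis
  proof (intro exI conjI)
    show "(1/2::real) > 0" by simp
    show "strict_mono_on {1..} Ns" by (rule sm)
    show "\<forall>k\<ge>1. Ns k \<ge> 1" by (rule N1)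
    show "\<forall>k\<ge>1. finite (S k) \<and> S k \<noteq> {} \<and> S k \<subseteq> {1..} \<and> (\<forall>j\<in>S k. C k j \<noteq> 0)"
      using Pk' by blast
    show "\<forall>k\<ge>1. real (card {n\<in>{1..Ns k}.
              (\<Sum>j\<in>S k. norm (C k j) * vext v (int j - int n)) /
              (\<Sum>j\<in>S k. norm (C k j) * v j) \<ge> real k}) \<ge> real (Ns k) * (1/2)"
      using Pk' by blast
  qed
qed

end

theorem mainTheorem6:
  fixes p :: real and v :: "nat \<Rightarrow> real"
  assumes "1 \<le> p"
    and "\<forall>n\<ge>1. v n > 0"
    and "\<exists>M. \<forall>n\<ge>1. v n / v (Suc n) \<le> M"
  shows "(distr_chaotic_B p v \<longleftrightarrow> dense_distr_chaotic_B p v) \<and>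
    (distr_chaotic_B p v \<longleftrightarrow>
      (\<exists>\<epsilon>::real. \<exists>N :: nat \<Rightarrow> nat. \<exists>S :: nat \<Rightarrow> nat set. \<exists>C :: nat \<Rightarrow> nat \<Rightarrow> complex.
         \<epsilon> > 0 \<and> strict_mono_on {1..} N \<and> (\<forall>k\<ge>1. N k \<ge> 1) \<and>
         (\<forall>k\<ge>1. finite (S k) \<and> S k \<noteq> {} \<and> S k \<subseteq> {1..} \<and> (\<forall>j\<in>S k. C k j \<noteq> 0)) \<and>
         (\<forall>k\<ge>1. real (card {n\<in>{1..N k}.
              (\<Sum>j\<in>S k. norm (C k j) * vext v (int j - int n)) /
              (\<Sum>j\<in>S k. norm (C k j) * v j) \<ge> real k}) \<ge> real (N k) * \<epsilon>)))"
proof -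
  obtain M0 where M0: "\<forall>n\<ge>1. v n / v (Suc n) \<le> M0" using assms(3) by blast
  define M where "M = max M0 1"
  interpret W: wsh p v M
  proof
    show "1 \<le> p" by (rule assms(1))
    show "\<And>n. n \<ge> 1 \<Longrightarrow> v n > 0" using assms(2) by blast
    show "1 \<le> M" unfolding M_def by simp
    fix n :: nat assume n: "n \<ge> 1"
    have vs: "v (Suc n) > 0" using assms(2) by simp
    have "v n / v (Suc n) \<le> M" using M0 n unfolding M_def by force
    thus "v n \<le> M * v (Suc n)" using vs by (simp add: divide_le_eq)
  qed
  let ?c = "\<exists>\<epsilon>::real. \<exists>N :: nat \<Rightarrow> nat. \<exists>S :: nat \<Rightarrow> nat set. \<exists>C :: nat \<Rightarrow> nat \<Rightarrow> complex.
         \<epsilon> > 0 \<and> strict_mono_on {1..} N \<and> (\<forall>k\<ge>1. N k \<ge> 1) \<and>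
         (\<forall>k\<ge>1. finite (S k) \<and> S k \<noteq> {} \<and> S k \<subseteq> {1..} \<and> (\<forall>j\<in>S k. C k j \<noteq> 0)) \<and>
         (\<forall>k\<ge>1. real (card {n\<in>{1..N k}.
              (\<Sum>j\<in>S k. norm (C k j) * vext v (int j - int n)) /
              (\<Sum>j\<in>S k. norm (C k j) * v j) \<ge> real k}) \<ge> real (N k) * \<epsilon>)"
  have AC: "distr_chaotic_B p v \<Longrightarrow> ?c" by (rule W.AC)
  have CB: "dense_distr_chaotic_B p v" if c: ?c
  proof -
    obtain \<epsilon> :: real and N :: "nat \<Rightarrow> nat" and S :: "nat \<Rightarrow> nat set" and C :: "nat \<Rightarrow> nat \<Rightarrow> complex"
      where e: "\<epsilon> > 0" and N1: "\<forall>k\<ge>1. N k \<ge> 1"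
        and SC: "\<forall>k\<ge>1. finite (S k) \<and> S k \<noteq> {} \<and> S k \<subseteq> {1..} \<and> (\<forall>j\<in>S k. C k j \<noteq> 0)"
        and cnt: "\<forall>k\<ge>1. real (card {n\<in>{1..N k}.
              (\<Sum>j\<in>S k. norm (C k j) * vext v (int j - int n)) /
              (\<Sum>j\<in>S k. norm (C k j) * v j) \<ge> real k}) \<ge> real (N k) * \<epsilon>"
      using c by (elim exE conjE) blast
    have GB: W.GBprop
      unfolding W.GBprop_def using W.good_block[OF e N1 SC cnt] by blast
    show ?thesis by (rule W.GB_ddc[OF GB])
  qed
  have BA: "dense_distr_chaotic_B p v \<Longrightarrow> distr_chaotic_B p v"
    unfolding dense_distr_chaotic_B_def distr_chaotic_B_def by blast
  show ?thesis using AC CB BA by blast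
qed


end
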